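(* Let $H,K$ be finite dimensional complex Hilbert spaces and let $\phi:\mathcal B(K)\to\mathcal B(H)$ be an arbitrary UCP map. Let $\mathcal S_\phi$ be the set of all states $\rho$ of $\mathcal B(K\otimes H)$ of the form $\rho(a\otimes b)=\langle(\phi(a)\otimes b)\xi,\xi\rangle$ ($a\in\mathcal B(K)$, $b\in\mathcal B(H)$), where $\xi$ ranges over the marginally cyclic unit vectors in $H\otimes H$. If $\mathcal S_\phi$ contains a single entangled state, then every state of $\mathcal S_\phi$ is entangled and $\phi$ preserves entanglement. Otherwise, $\phi$ is entanglement breaking.
   Context: A state of $\mathcal B(K\otimes H)$ is separable if it is a convex combination of product states $a\otimes b\mapsto\sigma(a)\tau(b)$ with $\sigma,\tau$ states of $\mathcal B(K)$, $\mathcal B(H)$; otherwise it is entangled. A unit vector $\xi\in H\otimes H$ is marginally cyclic if $(\mathcal B(H)\otimes\mathbf 1)\xi=H\otimes H$, equivalently if $(\mathbf 1\otimes b)\xi=0$ implies $b=0$ for $b\in\mathcal B(H)$. A UCP map $\phi:\mathcal B(K)\to\mathcal B(H)$ preserves entanglement if for every marginally cyclic unit vector $\xi\in H\otimes H$ the state $a\otimes b\mapsto\langle(\phi(a)\otimes b)\xi,\xi\rangle$ of $\mathcal B(K\otimes H)$ is entangled. $\phi$ is entanglement breaking if for every state $\rho$ of $\mathcal B(H\otimes H)$ the state $\rho\circ(\phi\otimes\mathrm{id}_{\mathcal B(H)})$ of $\mathcal B(K\otimes H)$ is separable, where $\phi\otimes\mathrm{id}$ is the UCP map sending $a\otimes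 b$ to $\phi(a)\otimes b$. *)

theory Defs
  imports "Jordan_Normal_Form.Matrix"
begin

text \<open>A finite dimensional complex Hilbert space of dimension d is
  modelled as complex column vectors of length d; B(C^d) is the set of d x d complex
  matrices (carrier_mat d d).  K = C^m, H = C^n.  Tensor products are realised via the
  Kronecker product with index (i1,i2) encoded as i1 * d2 + i2 (first factor major).
  The inner product is linear in the first argument.\<close>

definition mat_adj :: "complex mat \<Rightarrow> complex mat" where
  "mat_adj A = mat (dim_col A) (dim_row A) (\<lambda>(i,j). cnj (A $$ (j,i)))"

definition vinner :: "complex vec \<Rightarrow> complex vec \<Rightarrow> complex" where
  "vinner x y = (\<Sum>i<dim_vec x. x $ i * cnj (y $ i))"

definition unit_vec_c :: "nat \<Rightarrow> complex vec \<Rightarrow> bool" where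
  "unit_vec_c d x \<longleftrightarrow> x \<in> carrier_vec d \<and> vinner x x = 1"

definition psd :: "nat \<Rightarrow> complex mat \<Rightarrow> bool" where
  "psd d A \<longleftrightarrow> A \<in> carrier_mat d d \<and> (\<exists>B \<in> carrier_mat d d. A = mat_adj B * B)"

definition kron :: "complex mat \<Rightarrow> complex mat \<Rightarrow> complex mat" where
  "kron A B = mat (dim_row A * dim_row B) (dim_col A * dim_col B)
     (\<lambda>(i,j). A $$ (i div dim_row B, j div dim_col B) * B $$ (i mod dim_row B, j mod dim_col B))"

definition is_state :: "nat \<Rightarrow> (complex mat \<Rightarrow> complex) \<Rightarrow> bool" where
  "is_state d \<omega> \<longleftrightarrow>
     (\<forall>A \<in> carrier_mat d d. \<forall>B \<in> carrier_mat d d. \<omega> (A + B) = \<omega> A + \<omega> B) \<and>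
     (\<forall>c. \<forall>A \<in> carrier_mat d d. \<omega> (c \<cdot>\<^sub>m A) = c * \<omega> A) \<and>
     (\<forall>A. psd d A \<longrightarrow> \<omega> A \<in> \<real> \<and> 0 \<le> Re (\<omega> A)) \<and>
     \<omega> (1\<^sub>m d) = 1"

definition product_state :: "nat \<Rightarrow> nat \<Rightarrow> (complex mat \<Rightarrow> complex) \<Rightarrow> bool" where
  "product_state m n \<omega> \<longleftrightarrow> is_state (m * n) \<omega> \<and>
     (\<exists>\<sigma> \<tau>. is_state m \<sigma> \<and> is_state n \<tau> \<and>
        (\<forall>a \<in> carrier_mat m m. \<forall>b \<in> carrier_mat n n. \<omega> (kron a b) = \<sigma> a * \<tau> b))"

definition separable :: "nat \<Rightarrow> nat \<Rightarrow> (complex mat \<Rightarrow> complex) \<Rightarrow> bool" where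
  "separable m n \<omega> \<longleftrightarrow> is_state (m * n) \<omega> \<and>
     (\<exists>(k::nat) (p::nat \<Rightarrow> real) (\<omega>s::nat \<Rightarrow> complex mat \<Rightarrow> complex).
        (\<forall>i<k. 0 \<le> p i \<and> product_state m n (\<omega>s i)) \<and> (\<Sum>i<k. p i) = 1 \<and>
        (\<forall>X \<in> carrier_mat (m*n) (m*n). \<omega> X = (\<Sum>i<k. complex_of_real (p i) * \<omega>s i X)))"

definition entangled :: "nat \<Rightarrow> nat \<Rightarrow> (complex mat \<Rightarrow> complex) \<Rightarrow> bool" where
  "entangled m n \<omega> \<longleftrightarrow> is_state (m * n) \<omega> \<and> \<not> separable m n \<omega>"

text \<open>The ampliation \<phi> \<otimes> id_{B(C^k)} : B(C^m \<otimes> C^k) \<rightarrow> B(C^n \<otimes> C^k), applying \<phi>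
  blockwise; it sends kron a b to kron (\<phi> a) b.\<close>
definition tensor_id :: "(complex mat \<Rightarrow> complex mat) \<Rightarrow> nat \<Rightarrow> nat \<Rightarrow> nat \<Rightarrow> complex mat \<Rightarrow> complex mat" where
  "tensor_id \<phi> m n k X = mat (n * k) (n * k)
     (\<lambda>(i,j). (\<phi> (mat m m (\<lambda>(a,a'). X $$ (a * k + i mod k, a' * k + j mod k)))) $$ (i div k, j div k))"

definition UCP :: "nat \<Rightarrow> nat \<Rightarrow> (complex mat \<Rightarrow> complex mat) \<Rightarrow> bool" where
  "UCP m n \<phi> \<longleftrightarrow>
     (\<forall>A \<in> carrier_mat m m. \<phi> A \<in> carrier_mat n n) \<and>
     (\<forall>A \<in> carrier_mat m m. \<forall>B \<in> carrier_mat m m. \<phi> (A + B) = \<phi> A + \<phi> B) \<and>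
     (\<forall>c. \<forall>A \<in> carrier_mat m m. \<phi> (c \<cdot>\<^sub>m A) = c \<cdot>\<^sub>m \<phi> A) \<and>
     \<phi> (1\<^sub>m m) = 1\<^sub>m n \<and>
     (\<forall>k X. psd (m * k) X \<longrightarrow> psd (n * k) (tensor_id \<phi> m n k X))"

definition marginally_cyclic :: "nat \<Rightarrow> complex vec \<Rightarrow> bool" where
  "marginally_cyclic n \<xi> \<longleftrightarrow> \<xi> \<in> carrier_vec (n * n) \<and>
     (\<forall>b \<in> carrier_mat n n. kron (1\<^sub>m n) b *\<^sub>v \<xi> = 0\<^sub>v (n * n) \<longrightarrow> b = 0\<^sub>m n n)"

definition vstate :: "(complex mat \<Rightarrow> complex mat) \<Rightarrow> nat \<Rightarrow> nat \<Rightarrow> complex vec \<Rightarrow> complex mat \<Rightarrow> complex" where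
  "vstate \<phi> m n \<xi> = (\<lambda>X. vinner (tensor_id \<phi> m n n X *\<^sub>v \<xi>) \<xi>)"

definition S_phi :: "(complex mat \<Rightarrow> complex mat) \<Rightarrow> nat \<Rightarrow> nat \<Rightarrow> (complex mat \<Rightarrow> complex) set" where
  "S_phi \<phi> m n = {vstate \<phi> m n \<xi> | \<xi>. unit_vec_c (n * n) \<xi> \<and> marginally_cyclic n \<xi>}"

definition preserves_entanglement :: "nat \<Rightarrow> nat \<Rightarrow> (complex mat \<Rightarrow> complex mat) \<Rightarrow> bool" where
  "preserves_entanglement m n \<phi> \<longleftrightarrow>
     (\<forall>\<xi>. unit_vec_c (n * n) \<xi> \<and> marginally_cyclic n \<xi> \<longrightarrow> entangled m n (vstate \<phi> m n \<xi>))"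

definition entanglement_breaking :: "nat \<Rightarrow> nat \<Rightarrow> (complex mat \<Rightarrow> complex mat) \<Rightarrow> bool" where
  "entanglement_breaking m n \<phi> \<longleftrightarrow>
     (\<forall>\<rho>. is_state (n * n) \<rho> \<longrightarrow> separable m n (\<rho> \<circ> tensor_id \<phi> m n n))"

end

theory Submission
  imports Defs "Jordan_Normal_Form.Determinant"
begin

definition qf :: "nat \<Rightarrow> (nat \<Rightarrow> nat \<Rightarrow> complex) \<Rightarrow> (nat \<Rightarrow> complex) \<Rightarrow> complex" where
  "qf d Q x = (\<Sum>p<d. \<Sum>q<d. x p * cnj (x q) * Q p q)"

definition psdf :: "nat \<Rightarrow> (nat \<Rightarrow> nat \<Rightarrow> complex) \<Rightarrow> bool" where
  "psdf d Q \<longleftrightarrow> (\<forall>x. qf d Q x \<in> \<real> \<and> 0 \<le> Re (qf d Q x))"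

lemma ifz_simps:
  "(if b then t else 0) * y = (if b then t*y else (0::complex))"
  "y * (if b then t else 0) = (if b then y*t else (0::complex))"
  "cnj (if b then t else 0) = (if b then cnj t else 0)"
  by auto

lemma sum_if_const: "(\<Sum>q\<in>A. if P then f q else (0::complex)) = (if P then (\<Sum>q\<in>A. f q) else 0)"
  by auto

lemma qf_one: assumes "q < d"
  shows "qf d Q (\<lambda>p. if p = q then a else 0) = a * cnj a * Q q q"
  using assms by (simp add: qf_def ifz_simps sum.delta)

lemma qf_two: assumes "q < d" "k < d" "q \<noteq> k"
  shows "qf d Q (\<lambda>p. (if p = q then a else 0) + (if p = k then b else 0)) =
     a * cnj a * Q q q + a * cnj b * Q q k + b * cnj a * Q k q + b * cnj b * Q k k"
proof -
  have e: "\<And>A1 A2 B1 B2 (R::complex). (A1+A2)*cnj(B1+B2)*R = A1 * cnj B1 * R + A1 * cnj B2 * R + A2 * cnj B1 * R + A2 * cnj B2 * R"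
    by (simp add: algebra_simps)
  show ?thesis using assms
    unfolding qf_def e sum.distrib by (simp add: ifz_simps sum.delta)
qed

lemma qf_shift: assumes "k < d"
  shows "qf d Q (\<lambda>p. x p - (if p = k then t else 0)) =
    qf d Q x - cnj t * (\<Sum>p<d. x p * Q p k) - t * (\<Sum>q<d. cnj (x q) * Q k q) + t * cnj t * Q k k"
proof -
  have e: "\<And>A1 A2 B1 B2 (R::complex). (A1-A2)*cnj(B1-B2)*R = A1 * cnj B1 * R - A1 * cnj B2 * R - A2 * cnj B1 * R + A2 * cnj B2 * R"
    by (simp add: algebra_simps)
  show ?thesis using assms
    unfolding qf_def e sum.distrib sum_subtractf by (simp add: ifz_simps sum.delta sum_if_const sum_distrib_left algebra_simps)
qed

lemma psdf_herm: assumes "psdf d Q" "p < d" "q < d"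
  shows "Q q p = cnj (Q p q)"
proof (cases "p = q")
  case True
  have "qf d Q (\<lambda>pa. if pa = p then 1 else 0) \<in> \<real>" using assms(1) unfolding psdf_def by blast
  then have "Q p p \<in> \<real>" using qf_one[OF assms(2), of Q 1] by simp
  then show ?thesis using True by (simp add: Reals_cnj_iff)
next
  case False
  have "Im (qf d Q (\<lambda>pa. if pa = p then 1 else 0)) = 0" using assms(1) unfolding psdf_def complex_is_Real_iff by blast
  then have r1: "Im (Q p p) = 0" using qf_one[OF assms(2), of Q 1] by simp
  have "Im (qf d Q (\<lambda>pa. if pa = q then 1 else 0)) = 0" using assms(1) unfolding psdf_def complex_is_Real_iff by blast
  then have r2: "Im (Q q q) = 0" using qf_one[OF assms(3), of Q 1] by simp
  have "Im (qf d Q (\<lambda>pa. (if pa = p then 1 else 0) + (if pa = q then 1 else 0))) = 0"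
    using assms(1) unfolding psdf_def complex_is_Real_iff by blast
  then have "Im (Q p p + Q p q + Q q p + Q q q) = 0"
    using qf_two[OF assms(2,3) False, of Q 1 1] by simp
  then have a: "Im (Q p q) + Im (Q q p) = 0" using r1 r2 by simp
  have "Im (qf d Q (\<lambda>pa. (if pa = p then 1 else 0) + (if pa = q then \<i> else 0))) = 0"
    using assms(1) unfolding psdf_def complex_is_Real_iff by blast
  then have "Im (Q p p - \<i> * Q p q + \<i> * Q q p + Q q q) = 0"
    using qf_two[OF assms(2,3) False, of Q 1 \<i>] by simp
  then have b: "Re (Q q p) - Re (Q p q) = 0" using r1 r2 by simp
  from a b show ?thesis
    by (simp add: complex_eq_iff)
qed

lemma psdf_rank_step: assumes ps: "psdf (Suc d) Q"
  shows "\<exists>v. psdf (Suc d) (\<lambda>p q. Q p q - cnj (v p) * v q) \<and>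
     (\<forall>q<Suc d. Q d q - cnj (v d) * v q = 0 \<and> Q q d - cnj (v q) * v d = 0)"
proof -
  define \<alpha> where "\<alpha> = Q d d"
  have "qf (Suc d) Q (\<lambda>pa. if pa = d then 1 else 0) \<in> \<real> \<and> 0 \<le> Re (qf (Suc d) Q (\<lambda>pa. if pa = d then 1 else 0))"
    using ps unfolding psdf_def by blast
  then have ar: "\<alpha> \<in> \<real>" and ap: "0 \<le> Re \<alpha>" using qf_one[of d "Suc d" Q 1] by (auto simp: \<alpha>_def)
  have herm: "\<And>q. q < Suc d \<Longrightarrow> Q q d = cnj (Q d q)" by (rule psdf_herm[OF ps]) auto
  show ?thesis
  proof (cases "Re \<alpha> > 0")
    case True
    define s where "s = complex_of_real (sqrt (Re \<alpha>))"
    have s0: "s \<noteq> 0" using True by (simp add: s_def)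
    have cs: "cnj s = s" by (simp add: s_def)
    have ss: "s * s = \<alpha>"
    proof -
      have "s * s = complex_of_real (Re \<alpha>)" unfolding s_def using ap
        by (simp flip: of_real_mult)
      also have "\<dots> = \<alpha>" using ar by (simp add: complex_is_Real_iff complex_eq_iff)
      finally show ?thesis .
    qed
    have ca: "cnj \<alpha> = \<alpha>" using ar by (simp add: Reals_cnj_iff)
    define v where "v = (\<lambda>q. Q d q / s)"
    have vd: "v d = s" using ss s0 unfolding v_def \<alpha>_def by (metis nonzero_mult_div_cancel_right)
    have zr: "\<forall>q<Suc d. Q d q - cnj (v d) * v q = 0 \<and> Q q d - cnj (v q) * v d = 0"
    proof (intro allI impI conjI)
      fix q assume q: "q < Suc d"
      show "Q d q - cnj (v d) * v q = 0" using s0 unfolding vd cs by (simp add: v_def)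
      show "Q q d - cnj (v q) * v d = 0" using s0 herm[OF q] unfolding vd by (simp add: v_def cs)
    qed
    have "psdf (Suc d) (\<lambda>p q. Q p q - cnj (v p) * v q)"
      unfolding psdf_def
    proof
      fix x
      define \<beta> where "\<beta> = (\<Sum>p<Suc d. x p * cnj (v p))"
      have cb: "cnj \<beta> = (\<Sum>q<Suc d. cnj (x q) * v q)" by (simp add: \<beta>_def)
      have e1: "qf (Suc d) (\<lambda>p q. Q p q - cnj (v p) * v q) x = qf (Suc d) Q x - \<beta> * cnj \<beta>"
      proof -
        have bb: "\<beta> * cnj \<beta> = (\<Sum>p<Suc d. \<Sum>q<Suc d. x p * cnj (x q) * (cnj (v p) * v q))"
          unfolding cb unfolding \<beta>_def sum_product by (rule sum.cong[OF refl], rule sum.cong[OF refl]) (simp add: algebra_simps)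
        show ?thesis unfolding qf_def bb sum_subtractf[symmetric] right_diff_distrib ..
      qed
      have e2: "(\<Sum>p<Suc d. x p * Q p d) = s * \<beta>"
        unfolding \<beta>_def sum_distrib_left
        by (rule sum.cong[OF refl]) (use s0 herm cs in \<open>simp add: v_def\<close>)
      have e3: "(\<Sum>q<Suc d. cnj (x q) * Q d q) = s * cnj \<beta>"
        unfolding cb sum_distrib_left
        by (rule sum.cong[OF refl]) (use s0 in \<open>simp add: v_def\<close>)
      define t where "t = \<beta> / s"
      have "qf (Suc d) Q (\<lambda>p. x p - (if p = d then t else 0)) =
         qf (Suc d) Q x - cnj t * (s * \<beta>) - t * (s * cnj \<beta>) + t * cnj t * \<alpha>"
        using qf_shift[of d "Suc d" Q x t] e2 e3 by (simp add: \<alpha>_def)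
      also have "\<dots> = qf (Suc d) Q x - \<beta> * cnj \<beta>"
        unfolding t_def using s0 cs ss[symmetric] by (simp add: field_simps)
      finally have "qf (Suc d) (\<lambda>p q. Q p q - cnj (v p) * v q) x = qf (Suc d) Q (\<lambda>p. x p - (if p = d then t else 0))"
        using e1 by simp
      moreover have "qf (Suc d) Q (\<lambda>p. x p - (if p = d then t else 0)) \<in> \<real> \<and> 0 \<le> Re (qf (Suc d) Q (\<lambda>p. x p - (if p = d then t else 0)))"
        using ps unfolding psdf_def by blast
      ultimately show "qf (Suc d) (\<lambda>p q. Q p q - cnj (v p) * v q) x \<in> \<real> \<and> 0 \<le> Re (qf (Suc d) (\<lambda>p q. Q p q - cnj (v p) * v q) x)"
        by simp
    qed
    with zr show ?thesis by blast
  next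
    case False
    then have "Re \<alpha> = 0" using ap by simp
    then have a0: "\<alpha> = 0" using ar by (simp add: complex_is_Real_iff complex_eq_iff)
    have zr: "\<forall>q<Suc d. Q d q = 0"
    proof (intro allI impI)
      fix q assume q: "q < Suc d"
      show "Q d q = 0"
      proof (cases "q = d")
        case True then show ?thesis using a0 \<alpha>_def by simp
      next
        case qd: False
        show ?thesis
        proof (rule ccontr)
          define z where "z = Q d q"
          assume "Q d q \<noteq> 0"
          then have zp: "cmod z ^ 2 > 0" by (simp add: z_def)
          define c where "c = (\<bar>Re (Q q q)\<bar> + 1) / (2 * cmod z ^ 2)"
          define s' where "s' = - complex_of_real c * cnj z"
          have "qf (Suc d) Q (\<lambda>p. (if p = q then 1 else 0) + (if p = d then s' else 0)) =
               Q q q + cnj s' * Q q d + s' * Q d q + s' * cnj s' * Q d d"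
            using qf_two[OF q _ qd, of Q 1 s'] by simp
          also have "\<dots> = Q q q - 2 * complex_of_real c * (z * cnj z)"
            using herm[OF q] a0 unfolding \<alpha>_def s'_def z_def by (simp add: algebra_simps)
          also have "\<dots> = Q q q - complex_of_real (2 * c * cmod z ^ 2)"
            by (simp add: complex_norm_square[symmetric])
          moreover have "0 \<le> Re (qf (Suc d) Q (\<lambda>p. (if p = q then 1 else 0) + (if p = d then s' else 0)))"
            using ps unfolding psdf_def by blast
          ultimately have "0 \<le> Re (Q q q - complex_of_real (2 * c * cmod z ^ 2))"
            by simp
          moreover have "2 * c * cmod z ^ 2 = \<bar>Re (Q q q)\<bar> + 1" using zp unfolding c_def by simp
          ultimately show False by simp
        qed
      qed
    qed
    define v0 where "v0 = (\<lambda>_::nat. 0::complex)"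
    have "psdf (Suc d) (\<lambda>p q. Q p q - cnj (v0 p) * v0 q)" using ps by (simp add: v0_def)
    moreover have "\<forall>q<Suc d. Q d q - cnj (v0 d) * v0 q = 0 \<and> Q q d - cnj (v0 q) * v0 d = 0"
      using zr herm by (simp add: v0_def)
    ultimately show ?thesis by blast
  qed
qed

lemma psdf_decomp: "psdf d Q \<Longrightarrow> \<exists>u. \<forall>p<d. \<forall>q<d. Q p q = (\<Sum>t<d. cnj (u t p) * u t q)"
proof (induction d arbitrary: Q)
  case 0 then show ?case by simp
next
  case (Suc d)
  obtain v where v1: "psdf (Suc d) (\<lambda>p q. Q p q - cnj (v p) * v q)"
    and v2: "\<forall>q<Suc d. Q d q - cnj (v d) * v q = 0 \<and> Q q d - cnj (v q) * v d = 0"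
    using psdf_rank_step[OF Suc.prems] by blast
  define Q' where "Q' = (\<lambda>p q. Q p q - cnj (v p) * v q)"
  have "psdf d Q'"
    unfolding psdf_def
  proof
    fix x
    have "qf (Suc d) Q' x = qf d Q' x"
      unfolding qf_def using v2 by (simp add: Q'_def)
    moreover have "qf (Suc d) Q' x \<in> \<real> \<and> 0 \<le> Re (qf (Suc d) Q' x)" using v1 unfolding psdf_def Q'_def by blast
    ultimately show "qf d Q' x \<in> \<real> \<and> 0 \<le> Re (qf d Q' x)" by simp
  qed
  then obtain u' where u': "\<forall>p<d. \<forall>q<d. Q' p q = (\<Sum>t<d. cnj (u' t p) * u' t q)" using Suc.IH by blast
  define u where "u = (\<lambda>t. if t < d then (\<lambda>p. if p < d then u' t p else 0) else v)"
  show ?case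
  proof (rule exI[of _ u], intro allI impI)
    fix p q assume p: "p < Suc d" and q: "q < Suc d"
    have "(\<Sum>t<Suc d. cnj (u t p) * u t q) = (\<Sum>t<d. cnj (u t p) * u t q) + cnj (v p) * v q"
      by (simp add: u_def)
    also have "(\<Sum>t<d. cnj (u t p) * u t q) = (if p < d \<and> q < d then Q' p q else 0)"
      using u' by (cases "p < d"; cases "q < d") (simp_all add: u_def)
    finally show "Q p q = (\<Sum>t<Suc d. cnj (u t p) * u t q)"
      using v2 p q by (auto simp: Q'_def less_Suc_eq)
  qed
qed

definition munit :: "nat \<Rightarrow> nat \<Rightarrow> nat \<Rightarrow> complex mat" where
  "munit d p q = mat d d (\<lambda>(i,j). if i = p \<and> j = q then 1 else 0)"

definition vst :: "nat \<Rightarrow> (nat \<Rightarrow> complex) \<Rightarrow> complex mat \<Rightarrow> complex" where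
  "vst d g A = (\<Sum>p<d. \<Sum>q<d. A $$ (p,q) * cnj (g p) * g q)"

definition restr :: "nat \<Rightarrow> (nat \<times> nat) set \<Rightarrow> complex mat \<Rightarrow> complex mat" where
  "restr d S A = mat d d (\<lambda>(i,j). if (i,j) \<in> S then A $$ (i,j) else 0)"

definition linf :: "nat \<Rightarrow> (complex mat \<Rightarrow> complex) \<Rightarrow> bool" where
  "linf d f \<longleftrightarrow> (\<forall>A \<in> carrier_mat d d. \<forall>B \<in> carrier_mat d d. f (A + B) = f A + f B) \<and>
     (\<forall>c. \<forall>A \<in> carrier_mat d d. f (c \<cdot>\<^sub>m A) = c * f A)"

lemma munit_carrier[simp]: "munit d p q \<in> carrier_mat d d" by (simp add: munit_def)
lemma restr_carrier[simp]: "restr d S A \<in> carrier_mat d d" by (simp add: restr_def)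

lemma linf_zero: assumes "linf d f" shows "f (0\<^sub>m d d) = 0"
proof -
  have "f (0 \<cdot>\<^sub>m 1\<^sub>m d) = 0 * f (1\<^sub>m d)" using assms one_carrier_mat unfolding linf_def by blast
  moreover have "0 \<cdot>\<^sub>m 1\<^sub>m d = (0\<^sub>m d d :: complex mat)" by (auto simp: smult_mat_def)
  ultimately show ?thesis by simp
qed

lemma lin_expand_aux:
  assumes lf: "linf d f" and A: "A \<in> carrier_mat d d" and S: "finite S" "S \<subseteq> {..<d} \<times> {..<d}"
  shows "f A = (\<Sum>x\<in>S. A $$ x * f (munit d (fst x) (snd x))) + f (restr d ({..<d} \<times> {..<d} - S) A)"
  using S
proof (induction S rule: finite_induct)
  case empty
  have "restr d ({..<d} \<times> {..<d}) A = A" using A by (auto simp: restr_def)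
  then show ?case by simp
next
  case (insert x S)
  obtain p q where x: "x = (p,q)" by (cases x)
  have pq: "p < d" "q < d" using insert x by auto
  have "restr d ({..<d} \<times> {..<d} - S) A = restr d ({..<d} \<times> {..<d} - insert x S) A + A $$ (p,q) \<cdot>\<^sub>m munit d p q"
    using pq insert(2) x by (auto simp: restr_def munit_def)
  then have "f (restr d ({..<d} \<times> {..<d} - S) A) = f (restr d ({..<d} \<times> {..<d} - insert x S) A) + A $$ (p,q) * f (munit d p q)"
    using lf unfolding linf_def by simp
  then show ?case using insert x by (simp add: algebra_simps)
qed

lemma lin_expand:
  assumes lf: "linf d f" and A: "A \<in> carrier_mat d d"
  shows "f A = (\<Sum>p<d. \<Sum>q<d. A $$ (p,q) * f (munit d p q))"
proof -
  have "f A = (\<Sum>x\<in>{..<d} \<times> {..<d}. A $$ x * f (munit d (fst x) (snd x))) + f (restr d {} A)"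
    using lin_expand_aux[OF lf A, of "{..<d} \<times> {..<d}"] by simp
  moreover have "restr d {} A = 0\<^sub>m d d" by (auto simp: restr_def)
  moreover have "(\<Sum>p<d. \<Sum>q<d. A $$ (p,q) * f (munit d p q)) = (\<Sum>x\<in>{..<d} \<times> {..<d}. A $$ x * f (munit d (fst x) (snd x)))"
    by (subst sum.cartesian_product) (simp add: case_prod_beta)
  ultimately show ?thesis using linf_zero[OF lf] by simp
qed

lemma is_state_linf: "is_state d f \<Longrightarrow> linf d f"
  unfolding is_state_def linf_def by blast

lemma psd_rank1: "psd d (mat d d (\<lambda>(p,q). x p * cnj (x q)))"
proof (cases "d = 0")
  case True then show ?thesis unfolding psd_def by (auto intro!: bexI[of _ "0\<^sub>m 0 0"] eq_matI simp: mat_adj_def)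
next
  case False
  define B where "B = mat d d (\<lambda>(i,j). if i = 0 then cnj (x j) else 0)"
  have BB: "mat d d (\<lambda>(p,q). x p * cnj (x q)) = mat_adj B * B"
  proof (rule eq_matI)
    fix i j assume ij: "i < dim_row (mat_adj B * B)" "j < dim_col (mat_adj B * B)"
    then have i: "i < d" and j: "j < d" by (auto simp: mat_adj_def B_def)
    have "(mat_adj B * B) $$ (i,j) = (\<Sum>k<d. cnj (B $$ (k,i)) * B $$ (k,j))"
      using i j by (simp add: mat_adj_def B_def scalar_prod_def lessThan_atLeast0)
    also have "\<dots> = (\<Sum>k<d. if k = 0 then x i * cnj (x j) else 0)"
      using i j by (intro sum.cong) (auto simp: B_def)
    also have "\<dots> = x i * cnj (x j)" using False by simp
    finally show "mat d d (\<lambda>(p,q). x p * cnj (x q)) $$ (i,j) = (mat_adj B * B) $$ (i,j)" using i j by simp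
  qed (auto simp: mat_adj_def B_def)
  have Bc: "B \<in> carrier_mat d d" by (simp add: B_def)
  show ?thesis unfolding psd_def by (intro conjI bexI[of _ B]) (simp, rule BB, rule Bc)
qed

lemma state_psdf: assumes "is_state d f" shows "psdf d (\<lambda>p q. f (munit d p q))"
  unfolding psdf_def
proof
  fix x
  have "qf d (\<lambda>p q. f (munit d p q)) x = f (mat d d (\<lambda>(p,q). x p * cnj (x q)))"
    unfolding qf_def by (subst lin_expand[OF is_state_linf[OF assms]]) (auto simp: mult.assoc)
  then show "qf d (\<lambda>p q. f (munit d p q)) x \<in> \<real> \<and> 0 \<le> Re (qf d (\<lambda>p q. f (munit d p q)) x)"
    using assms psd_rank1[of d x] unfolding is_state_def by simp
qed

lemma state_decomp_units: assumes "is_state d f"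
  shows "\<exists>u. \<forall>p<d. \<forall>q<d. f (munit d p q) = (\<Sum>t<d. cnj (u t p) * u t q)"
  using psdf_decomp[OF state_psdf[OF assms]] by blast

lemma vst_expand: "vst d g A = (\<Sum>p<d. \<Sum>q<d. A $$ (p,q) * (cnj (g p) * g q))"
  unfolding vst_def by (simp add: mult.assoc)

lemma state_decomp: assumes "is_state d f"
  shows "\<exists>u. \<forall>A \<in> carrier_mat d d. f A = (\<Sum>t<d. vst d (u t) A)"
proof -
  obtain u where u: "\<forall>p<d. \<forall>q<d. f (munit d p q) = (\<Sum>t<d. cnj (u t p) * u t q)"
    using state_decomp_units[OF assms] by blast
  show ?thesis
  proof (intro exI ballI)
    fix A :: "complex mat" assume A: "A \<in> carrier_mat d d"
    have "f A = (\<Sum>p<d. \<Sum>q<d. A $$ (p,q) * (\<Sum>t<d. cnj (u t p) * u t q))"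
      using lin_expand[OF is_state_linf[OF assms] A] u by simp
    also have "\<dots> = (\<Sum>t<d. vst d (u t) A)"
      unfolding vst_expand sum_distrib_left by (subst sum.swap, rule sum.cong[OF refl], subst sum.swap, simp)
    finally show "f A = (\<Sum>t<d. vst d (u t) A)" .
  qed
qed

lemma vst_linf: "linf d (vst d g)"
  unfolding linf_def vst_def
  by (auto simp: sum.distrib sum_distrib_left algebra_simps)

lemma vst_pos: assumes B: "B \<in> carrier_mat d d"
  shows "vst d g (mat_adj B * B) = complex_of_real (\<Sum>k<d. (cmod (\<Sum>q<d. B $$ (k,q) * g q))^2)"
proof -
  have "vst d g (mat_adj B * B) = (\<Sum>p<d. \<Sum>q<d. (\<Sum>k<d. cnj (B $$ (k,p)) * B $$ (k,q)) * cnj (g p) * g q)"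
    unfolding vst_def using B
    by (intro sum.cong refl) (simp add: mat_adj_def scalar_prod_def lessThan_atLeast0)
  also have "\<dots> = (\<Sum>p<d. \<Sum>q<d. \<Sum>k<d. cnj (B $$ (k,p)) * B $$ (k,q) * cnj (g p) * g q)"
    by (simp add: sum_distrib_right)
  also have "\<dots> = (\<Sum>p<d. \<Sum>k<d. \<Sum>q<d. cnj (B $$ (k,p)) * B $$ (k,q) * cnj (g p) * g q)"
    by (rule sum.cong[OF refl], rule sum.swap)
  also have "\<dots> = (\<Sum>k<d. \<Sum>p<d. \<Sum>q<d. cnj (B $$ (k,p)) * B $$ (k,q) * cnj (g p) * g q)"
    by (rule sum.swap)
  also have "\<dots> = (\<Sum>k<d. cnj (\<Sum>p<d. B $$ (k,p) * g p) * (\<Sum>q<d. B $$ (k,q) * g q))"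
    apply (simp add: sum_product cnj_sum mult_ac)
    apply (rule sum.cong[OF refl])
    by (rule sum.swap)
  also have "\<dots> = (\<Sum>k<d. complex_of_real ((cmod (\<Sum>q<d. B $$ (k,q) * g q))^2))"
    by (rule sum.cong[OF refl]) (simp only: complex_norm_square, rule mult.commute)
  also have "\<dots> = complex_of_real (\<Sum>k<d. (cmod (\<Sum>q<d. B $$ (k,q) * g q))^2)"
    by (simp only: of_real_sum)
  finally show ?thesis .
qed

lemma vst_one: "vst d g (1\<^sub>m d) = complex_of_real (\<Sum>p<d. (cmod (g p))^2)"
proof -
  have "vst d g (1\<^sub>m d) = (\<Sum>p<d. \<Sum>q<d. (if p = q then cnj (g p) * g q else 0))"
    unfolding vst_def by (intro sum.cong refl) auto
  also have "\<dots> = (\<Sum>p<d. cnj (g p) * g p)" by simp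
  also have "\<dots> = (\<Sum>p<d. complex_of_real ((cmod (g p))^2))"
    by (rule sum.cong[OF refl]) (simp only: complex_norm_square, rule mult.commute)
  also have "\<dots> = complex_of_real (\<Sum>p<d. (cmod (g p))^2)"
    by (simp only: of_real_sum)
  finally show ?thesis .
qed

lemma vst_sum_state:
  assumes fin: "finite I" and one: "(\<Sum>x\<in>I. vst d (h x) (1\<^sub>m d)) = 1"
  shows "is_state d (\<lambda>A. \<Sum>x\<in>I. vst d (h x) A)"
proof -
  have a: "\<forall>A\<in>carrier_mat d d. \<forall>B\<in>carrier_mat d d. (\<Sum>x\<in>I. vst d (h x) (A + B)) = (\<Sum>x\<in>I. vst d (h x) A) + (\<Sum>x\<in>I. vst d (h x) B)"
    using vst_linf unfolding linf_def by (simp add: sum.distrib)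
  have b: "\<forall>c. \<forall>A\<in>carrier_mat d d. (\<Sum>x\<in>I. vst d (h x) (c \<cdot>\<^sub>m A)) = c * (\<Sum>x\<in>I. vst d (h x) A)"
    using vst_linf unfolding linf_def by (simp add: sum_distrib_left)
  have c: "\<forall>A. psd d A \<longrightarrow> (\<Sum>x\<in>I. vst d (h x) A) \<in> \<real> \<and> 0 \<le> Re (\<Sum>x\<in>I. vst d (h x) A)"
  proof (intro allI impI)
    fix A assume "psd d A"
    then obtain B where B: "B \<in> carrier_mat d d" and AB: "A = mat_adj B * B" unfolding psd_def by auto
    have "(\<Sum>x\<in>I. vst d (h x) A) = complex_of_real (\<Sum>x\<in>I. \<Sum>k<d. (cmod (\<Sum>q<d. B $$ (k,q) * h x q))^2)"
      unfolding AB vst_pos[OF B] by (simp only: of_real_sum)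
    then show "(\<Sum>x\<in>I. vst d (h x) A) \<in> \<real> \<and> 0 \<le> Re (\<Sum>x\<in>I. vst d (h x) A)"
      by (simp add: sum_nonneg)
  qed
  show ?thesis unfolding is_state_def using a b c one by blast
qed

definition pvec :: "nat \<Rightarrow> (nat \<Rightarrow> complex) \<Rightarrow> (nat \<Rightarrow> complex) \<Rightarrow> nat \<Rightarrow> complex" where
  "pvec n g y = (\<lambda>P. g (P div n) * y (P mod n))"

lemma sum_shift_up: "(\<Sum>k<a+n. f k) = (\<Sum>k<(a::nat). f k) + (\<Sum>l<n. f (a+l))"
  by (induction n) (simp_all add: add.assoc)

lemma sum_split_mult: fixes m n :: nat and F :: "nat \<Rightarrow> 'a::comm_monoid_add"
  shows "(\<Sum>P<m*n. F P) = (\<Sum>a<m. \<Sum>l<n. F (a*n + l))"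
proof (induction m)
  case 0 then show ?case by simp
next
  case (Suc m)
  have "(\<Sum>P<Suc m * n. F P) = (\<Sum>P<m*n + n. F P)" by (simp add: add.commute)
  also have "\<dots> = (\<Sum>P<m*n. F P) + (\<Sum>l<n. F (m*n + l))" by (rule sum_shift_up)
  finally show ?case using Suc by simp
qed

lemma divmod_aux: assumes "l < (n::nat)" shows "(a*n + l) div n = a" "(a*n + l) mod n = l"
  using assms by auto

lemma kron_entry: assumes a: "a \<in> carrier_mat m m" and b: "b \<in> carrier_mat n n"
  and "\<alpha> < m" "\<alpha>' < m" "l < n" "l' < n"
  shows "kron a b $$ (\<alpha>*n+l, \<alpha>'*n+l') = a $$ (\<alpha>,\<alpha>') * b $$ (l,l')"
proof -
  have aux: "\<And>x z. x < m \<Longrightarrow> z < n \<Longrightarrow> x*n + z < m*n"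
  proof -
    fix x z assume "x < m" "z < n"
    then have "x*n + z < (x+1)*n" "(x+1)*n \<le> m*n" by (simp, intro mult_le_mono1, simp)
    then show "x*n + z < m*n" by linarith
  qed
  have "\<alpha>*n+l < m*n" "\<alpha>'*n+l' < m*n" using assms(3-6) aux by auto
  then show ?thesis using assms unfolding kron_def by (simp add: divmod_aux)
qed

lemma vst_kron: assumes a: "a \<in> carrier_mat m m" and b: "b \<in> carrier_mat n n"
  shows "vst (m*n) (pvec n g y) (kron a b) = vst m g a * vst n y b"
proof -
  have "vst (m*n) (pvec n g y) (kron a b) =
     (\<Sum>\<alpha><m. \<Sum>l<n. \<Sum>\<alpha>'<m. \<Sum>l'<n. (a $$ (\<alpha>,\<alpha>') * cnj (g \<alpha>) * g \<alpha>') * (b $$ (l,l') * cnj (y l) * y l'))"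
    unfolding vst_def sum_split_mult
    apply (intro sum.cong refl)
    apply (simp add: kron_entry[OF a b] pvec_def divmod_aux)
    done
  also have "\<dots> = vst m g a * vst n y b"
    unfolding vst_def sum_product by simp
  finally show ?thesis .
qed

lemma kron_one: "kron (1\<^sub>m m) (1\<^sub>m n) = (1\<^sub>m (m*n) :: complex mat)"
proof (rule eq_matI)
  fix i j assume "i < dim_row (1\<^sub>m (m*n) :: complex mat)" "j < dim_col (1\<^sub>m (m*n) :: complex mat)"
  then have i: "i < m*n" and j: "j < m*n" by auto
  then have n: "n > 0" by (cases n) auto
  have "i div n < m" "j div n < m" using i j by (simp_all add: less_mult_imp_div_less)
  moreover have "i mod n < n" "j mod n < n" using n by auto
  moreover have "(i div n = j div n \<and> i mod n = j mod n) = (i = j)"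
    by (metis div_mult_mod_eq)
  ultimately show "kron (1\<^sub>m m) (1\<^sub>m n) $$ (i,j) = (1\<^sub>m (m*n) :: complex mat) $$ (i,j)"
    using i j unfolding kron_def by auto
qed (auto simp: kron_def)

lemma vst_one_real: "vst d g (1\<^sub>m d) \<in> \<real>" "0 \<le> Re (vst d g (1\<^sub>m d))"
  unfolding vst_one by (auto simp: sum_nonneg)

lemma vst_zero: assumes "vst d g (1\<^sub>m d) = 0" shows "vst d g A = 0"
proof -
  have "(\<Sum>p<d. (cmod (g p))^2) = 0" using assms unfolding vst_one by (simp only: of_real_eq_0_iff)
  then have "\<forall>p\<in>{..<d}. (cmod (g p))^2 = 0" by (subst sum_nonneg_eq_0_iff[symmetric]) auto
  then have "\<forall>p<d. g p = 0" by auto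
  then show ?thesis unfolding vst_def by simp
qed

lemma norm_state: assumes nz: "vst d g (1\<^sub>m d) \<noteq> 0"
  shows "is_state d (\<lambda>A. vst d g A / vst d g (1\<^sub>m d))"
proof -
  define w where "w = vst d g (1\<^sub>m d)"
  define r where "r = Re w"
  have wr: "w = complex_of_real r" using vst_one_real(1)[of d g] unfolding w_def r_def
    by (simp add: complex_is_Real_iff complex_eq_iff)
  have "r \<noteq> 0" using nz wr unfolding w_def by auto
  moreover have "r \<ge> 0" using vst_one_real(2)[of d g] unfolding w_def r_def by simp
  ultimately have r: "w = complex_of_real r" "r > 0" using wr by auto
  have a: "\<forall>A\<in>carrier_mat d d. \<forall>B\<in>carrier_mat d d. vst d g (A + B) / w = vst d g A / w + vst d g B / w"
    using vst_linf unfolding linf_def by (simp add: add_divide_distrib)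
  have b: "\<forall>c. \<forall>A\<in>carrier_mat d d. vst d g (c \<cdot>\<^sub>m A) / w = c * (vst d g A / w)"
    using vst_linf unfolding linf_def by simp
  have c: "\<forall>A. psd d A \<longrightarrow> vst d g A / w \<in> \<real> \<and> 0 \<le> Re (vst d g A / w)"
  proof (intro allI impI)
    fix A assume "psd d A"
    then obtain B where B: "B \<in> carrier_mat d d" and AB: "A = mat_adj B * B" unfolding psd_def by auto
    define s where "s = (\<Sum>k<d. (cmod (\<Sum>q<d. B $$ (k,q) * g q))^2)"
    have s0: "s \<ge> 0" unfolding s_def by (simp add: sum_nonneg)
    have "vst d g A / w = complex_of_real (s / r)" unfolding AB vst_pos[OF B] r s_def by simp
    then show "vst d g A / w \<in> \<real> \<and> 0 \<le> Re (vst d g A / w)" using s0 r by simp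
  qed
  have "vst d g (1\<^sub>m d) / w = 1" using nz unfolding w_def by simp
  then show ?thesis unfolding is_state_def w_def[symmetric] using a b c by blast
qed

lemma product_state_pvec:
  assumes nz: "vst (m*n) (pvec n g y) (1\<^sub>m (m*n)) \<noteq> 0"
  shows "product_state m n (\<lambda>X. vst (m*n) (pvec n g y) X / vst (m*n) (pvec n g y) (1\<^sub>m (m*n)))"
proof -
  have w: "vst (m*n) (pvec n g y) (1\<^sub>m (m*n)) = vst m g (1\<^sub>m m) * vst n y (1\<^sub>m n)"
    using vst_kron[of "1\<^sub>m m" m "1\<^sub>m n" n g y] by (simp add: kron_one)
  then have n1: "vst m g (1\<^sub>m m) \<noteq> 0" and n2: "vst n y (1\<^sub>m n) \<noteq> 0" using nz by auto
  show ?thesis unfolding product_state_def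
  proof (intro conjI exI ballI)
    show "is_state (m*n) (\<lambda>X. vst (m*n) (pvec n g y) X / vst (m*n) (pvec n g y) (1\<^sub>m (m*n)))"
      by (rule norm_state[OF nz])
    show "is_state m (\<lambda>A. vst m g A / vst m g (1\<^sub>m m))" by (rule norm_state[OF n1])
    show "is_state n (\<lambda>A. vst n y A / vst n y (1\<^sub>m n))" by (rule norm_state[OF n2])
    fix a b :: "complex mat" assume a: "a \<in> carrier_mat m m" and b: "b \<in> carrier_mat n n"
    show "vst (m*n) (pvec n g y) (kron a b) / vst (m*n) (pvec n g y) (1\<^sub>m (m*n)) =
          vst m g a / vst m g (1\<^sub>m m) * (vst n y b / vst n y (1\<^sub>m n))"
      unfolding w vst_kron[OF a b] by simp
  qed
qed

lemma is_state_cong: assumes fg: "\<forall>X\<in>carrier_mat d d. f X = g X" and st: "is_state d f" shows "is_state d g"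
proof -
  have a: "\<forall>A\<in>carrier_mat d d. \<forall>B\<in>carrier_mat d d. g (A + B) = g A + g B"
    using st fg unfolding is_state_def by (metis add_carrier_mat)
  have b: "\<forall>c. \<forall>A\<in>carrier_mat d d. g (c \<cdot>\<^sub>m A) = c * g A"
    using st fg unfolding is_state_def by (metis smult_carrier_mat)
  have c: "\<forall>A. psd d A \<longrightarrow> g A \<in> \<real> \<and> 0 \<le> Re (g A)"
  proof (intro allI impI)
    fix A assume A: "psd d A"
    then have "A \<in> carrier_mat d d" unfolding psd_def by blast
    then have "g A = f A" using fg by simp
    then show "g A \<in> \<real> \<and> 0 \<le> Re (g A)" using st A unfolding is_state_def by simp
  qed
  have "g (1\<^sub>m d) = 1" using fg st one_carrier_mat unfolding is_state_def by metis
  then show ?thesis unfolding is_state_def using a b c by blast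
qed

lemma sep_criterion:
  fixes g y :: "'i \<Rightarrow> nat \<Rightarrow> complex"
  assumes fin: "finite I"
    and eq: "\<forall>X\<in>carrier_mat (m*n) (m*n). \<omega> X = (\<Sum>x\<in>I. vst (m*n) (pvec n (g x) (y x)) X)"
    and one: "\<omega> (1\<^sub>m (m*n)) = 1"
  shows "separable m n \<omega>"
proof -
  define h where "h x = pvec n (g x) (y x)" for x
  define w where "w x = vst (m*n) (h x) (1\<^sub>m (m*n))" for x
  define I' where "I' = {x\<in>I. w x \<noteq> 0}"
  have finI': "finite I'" using fin unfolding I'_def by simp
  have eq': "\<forall>X\<in>carrier_mat (m*n) (m*n). \<omega> X = (\<Sum>x\<in>I'. vst (m*n) (h x) X)"
  proof
    fix X :: "complex mat" assume "X \<in> carrier_mat (m*n) (m*n)"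
    then have "\<omega> X = (\<Sum>x\<in>I. vst (m*n) (h x) X)" using eq unfolding h_def by simp
    also have "\<dots> = (\<Sum>x\<in>I'. vst (m*n) (h x) X)"
      unfolding I'_def using fin by (intro sum.mono_neutral_right) (auto simp: w_def vst_zero)
    finally show "\<omega> X = (\<Sum>x\<in>I'. vst (m*n) (h x) X)" .
  qed
  have one': "(\<Sum>x\<in>I'. w x) = 1" using eq' one unfolding w_def by simp
  have st: "is_state (m*n) \<omega>"
    by (rule is_state_cong[OF _ vst_sum_state[OF finI']]) (use eq' one' w_def in auto)
  have wr: "\<And>x. w x = complex_of_real (Re (w x))" "\<And>x. 0 \<le> Re (w x)"
    using vst_one_real unfolding w_def by (auto simp: complex_is_Real_iff complex_eq_iff)
  obtain f where f: "bij_betw f {..<card I'} I'"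
    using ex_bij_betw_nat_finite[OF finI'] lessThan_atLeast0 by metis
  define k where "k = card I'"
  define p where "p i = Re (w (f i))" for i
  define \<omega>s where "\<omega>s i = (\<lambda>X. vst (m*n) (h (f i)) X / w (f i))" for i
  show ?thesis unfolding separable_def
  proof (intro conjI exI)
    show "is_state (m*n) \<omega>" by fact
    show "\<forall>i<k. 0 \<le> p i \<and> product_state m n (\<omega>s i)"
    proof (intro allI impI conjI)
      fix i assume "i < k"
      then have fi: "f i \<in> I'" using f unfolding k_def bij_betw_def by auto
      show "0 \<le> p i" unfolding p_def using wr by simp
      show "product_state m n (\<omega>s i)"
        unfolding \<omega>s_def w_def h_def using fi unfolding I'_def w_def h_def
        by (intro product_state_pvec) auto
    qed
    have "(\<Sum>i<k. complex_of_real (p i)) = (\<Sum>x\<in>I'. w x)"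
      unfolding p_def k_def using wr(1) sum.reindex_bij_betw[OF f, of w] by simp
    then show "(\<Sum>i<k. p i) = 1" using one' by (metis of_real_eq_1_iff of_real_sum)
    show "\<forall>X\<in>carrier_mat (m*n) (m*n). \<omega> X = (\<Sum>i<k. complex_of_real (p i) * \<omega>s i X)"
    proof
      fix X :: "complex mat" assume X: "X \<in> carrier_mat (m*n) (m*n)"
      have "(\<Sum>i<k. complex_of_real (p i) * \<omega>s i X) = (\<Sum>i<k. vst (m*n) (h (f i)) X)"
      proof (rule sum.cong[OF refl])
        fix i assume "i \<in> {..<k}"
        then have fi: "f i \<in> I'" using f unfolding k_def bij_betw_def by auto
        then have "w (f i) \<noteq> 0" unfolding I'_def by simp
        then show "complex_of_real (p i) * \<omega>s i X = vst (m*n) (h (f i)) X"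
          unfolding p_def \<omega>s_def using wr(1)[of "f i"] by simp
      qed
      also have "\<dots> = (\<Sum>x\<in>I'. vst (m*n) (h x) X)"
        unfolding k_def using sum.reindex_bij_betw[OF f, of "\<lambda>x. vst (m*n) (h x) X"] by simp
      finally show "\<omega> X = (\<Sum>i<k. complex_of_real (p i) * \<omega>s i X)" using eq' X by simp
    qed
  qed
qed

lemma idx_lt: assumes "x < m" "z < (k::nat)" shows "x*k + z < m*k"
proof -
  have "x*k + z < (x+1)*k" "(x+1)*k \<le> m*k" using assms by (simp, intro mult_le_mono1, simp)
  then show ?thesis by linarith
qed

definition blk :: "nat \<Rightarrow> nat \<Rightarrow> complex mat \<Rightarrow> nat \<Rightarrow> nat \<Rightarrow> complex mat" where
  "blk m k X i j = mat m m (\<lambda>(a,a'). X $$ (a * k + i mod k, a' * k + j mod k))"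

lemma tid_entry: "i < n*k \<Longrightarrow> j < n*k \<Longrightarrow> tensor_id \<phi> m n k X $$ (i,j) = \<phi> (blk m k X i j) $$ (i div k, j div k)"
  unfolding tensor_id_def blk_def by simp

lemma tid_carrier[simp]: "tensor_id \<phi> m n k X \<in> carrier_mat (n*k) (n*k)"
  unfolding tensor_id_def by simp

lemma tid_dims[simp]: "dim_row (tensor_id \<phi> m n k X) = n*k" "dim_col (tensor_id \<phi> m n k X) = n*k"
  unfolding tensor_id_def by simp_all

lemma blk_carrier[simp]: "blk m k X i j \<in> carrier_mat m m" unfolding blk_def by simp

lemma UCP_D: assumes "UCP m n \<phi>"
  shows "\<And>A. A \<in> carrier_mat m m \<Longrightarrow> \<phi> A \<in> carrier_mat n n"
    "\<And>A B. A \<in> carrier_mat m m \<Longrightarrow> B \<in> carrier_mat m m \<Longrightarrow> \<phi> (A + B) = \<phi> A + \<phi> B"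
    "\<And>c A. A \<in> carrier_mat m m \<Longrightarrow> \<phi> (c \<cdot>\<^sub>m A) = c \<cdot>\<^sub>m \<phi> A"
    "\<phi> (1\<^sub>m m) = 1\<^sub>m n"
    "\<And>k X. psd (m * k) X \<Longrightarrow> psd (n * k) (tensor_id \<phi> m n k X)"
  using assms unfolding UCP_def by blast+

lemma tid_add: assumes U: "UCP m n \<phi>" and X: "X \<in> carrier_mat (m*k) (m*k)" and Y: "Y \<in> carrier_mat (m*k) (m*k)"
  shows "tensor_id \<phi> m n k (X + Y) = tensor_id \<phi> m n k X + tensor_id \<phi> m n k Y"
proof (rule eq_matI)
  fix i j assume "i < dim_row (tensor_id \<phi> m n k X + tensor_id \<phi> m n k Y)" "j < dim_col (tensor_id \<phi> m n k X + tensor_id \<phi> m n k Y)"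
  then have i: "i < n*k" and j: "j < n*k" by auto
  then have k: "k > 0" by (cases k) auto
  have "blk m k (X + Y) i j = blk m k X i j + blk m k Y i j"
    unfolding blk_def using X Y k by (intro eq_matI) (auto simp: idx_lt)
  then have "\<phi> (blk m k (X + Y) i j) = \<phi> (blk m k X i j) + \<phi> (blk m k Y i j)"
    using UCP_D(2)[OF U] by simp
  moreover have "i div k < n" "j div k < n" using i j by (simp_all add: less_mult_imp_div_less)
  ultimately show "tensor_id \<phi> m n k (X + Y) $$ (i,j) = (tensor_id \<phi> m n k X + tensor_id \<phi> m n k Y) $$ (i,j)"
    using i j UCP_D(1)[OF U, of "blk m k X i j"] UCP_D(1)[OF U, of "blk m k Y i j"] by (simp add: tid_entry)
qed auto

lemma tid_smult: assumes U: "UCP m n \<phi>" and X: "X \<in> carrier_mat (m*k) (m*k)"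
  shows "tensor_id \<phi> m n k (c \<cdot>\<^sub>m X) = c \<cdot>\<^sub>m tensor_id \<phi> m n k X"
proof (rule eq_matI)
  fix i j assume "i < dim_row (c \<cdot>\<^sub>m tensor_id \<phi> m n k X)" "j < dim_col (c \<cdot>\<^sub>m tensor_id \<phi> m n k X)"
  then have i: "i < n*k" and j: "j < n*k" by auto
  then have k: "k > 0" by (cases k) auto
  have "blk m k (c \<cdot>\<^sub>m X) i j = c \<cdot>\<^sub>m blk m k X i j"
    unfolding blk_def using X k by (intro eq_matI) (auto simp: idx_lt)
  then have "\<phi> (blk m k (c \<cdot>\<^sub>m X) i j) = c \<cdot>\<^sub>m \<phi> (blk m k X i j)"
    using UCP_D(3)[OF U] by simp
  moreover have "i div k < n" "j div k < n" using i j by (simp_all add: less_mult_imp_div_less)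
  ultimately show "tensor_id \<phi> m n k (c \<cdot>\<^sub>m X) $$ (i,j) = (c \<cdot>\<^sub>m tensor_id \<phi> m n k X) $$ (i,j)"
    using i j UCP_D(1)[OF U, of "blk m k X i j"] by (simp add: tid_entry)
qed auto

lemma tid_kron: assumes U: "UCP m n \<phi>" and a: "a \<in> carrier_mat m m" and b: "b \<in> carrier_mat k k"
  shows "tensor_id \<phi> m n k (kron a b) = kron (\<phi> a) b"
proof (rule eq_matI)
  have pa: "\<phi> a \<in> carrier_mat n n" using UCP_D(1)[OF U a] .
  fix i j assume "i < dim_row (kron (\<phi> a) b)" "j < dim_col (kron (\<phi> a) b)"
  then have i: "i < n*k" and j: "j < n*k" using pa b by (auto simp: kron_def)
  then have k: "k > 0" by (cases k) auto
  have "blk m k (kron a b) i j = b $$ (i mod k, j mod k) \<cdot>\<^sub>m a"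
    unfolding blk_def using a b k by (intro eq_matI) (auto simp: kron_entry[OF a b] mult.commute)
  then have "\<phi> (blk m k (kron a b) i j) = b $$ (i mod k, j mod k) \<cdot>\<^sub>m \<phi> a"
    using UCP_D(3)[OF U a] by simp
  moreover have "i div k < n" "j div k < n" using i j by (simp_all add: less_mult_imp_div_less)
  ultimately show "tensor_id \<phi> m n k (kron a b) $$ (i,j) = kron (\<phi> a) b $$ (i,j)"
    using i j pa b by (simp add: tid_entry kron_def mult.commute)
next
  have pa: "\<phi> a \<in> carrier_mat n n" using UCP_D(1)[OF U a] .
  show "dim_row (tensor_id \<phi> m n k (kron a b)) = dim_row (kron (\<phi> a) b)"
    "dim_col (tensor_id \<phi> m n k (kron a b)) = dim_col (kron (\<phi> a) b)"
    using pa b by (auto simp: kron_def tensor_id_def)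
qed

lemma tid_one: assumes U: "UCP m n \<phi>"
  shows "tensor_id \<phi> m n k (1\<^sub>m (m*k)) = 1\<^sub>m (n*k)"
  using tid_kron[OF U, of "1\<^sub>m m" "1\<^sub>m k"] UCP_D(4)[OF U] by (simp add: kron_one)

lemma comp_state: assumes U: "UCP m n \<phi>" and st: "is_state (n*k) \<rho>"
  shows "is_state (m*k) (\<rho> \<circ> tensor_id \<phi> m n k)"
proof -
  have a: "\<forall>A\<in>carrier_mat (m*k) (m*k). \<forall>B\<in>carrier_mat (m*k) (m*k).
      (\<rho> \<circ> tensor_id \<phi> m n k) (A + B) = (\<rho> \<circ> tensor_id \<phi> m n k) A + (\<rho> \<circ> tensor_id \<phi> m n k) B"
    using st unfolding is_state_def by (simp add: tid_add[OF U])
  have b: "\<forall>c. \<forall>A\<in>carrier_mat (m*k) (m*k). (\<rho> \<circ> tensor_id \<phi> m n k) (c \<cdot>\<^sub>m A) = c * (\<rho> \<circ> tensor_id \<phi> m n k) A"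
    using st unfolding is_state_def by (simp add: tid_smult[OF U])
  have c: "\<forall>A. psd (m*k) A \<longrightarrow> (\<rho> \<circ> tensor_id \<phi> m n k) A \<in> \<real> \<and> 0 \<le> Re ((\<rho> \<circ> tensor_id \<phi> m n k) A)"
    using st UCP_D(5)[OF U] unfolding is_state_def by simp
  have d: "(\<rho> \<circ> tensor_id \<phi> m n k) (1\<^sub>m (m*k)) = 1"
    using st tid_one[OF U] unfolding is_state_def by simp
  show ?thesis unfolding is_state_def using a b c d by blast
qed

lemma vinner_vst: assumes xi: "\<xi> \<in> carrier_vec d" and Y: "Y \<in> carrier_mat d d"
  shows "vinner (Y *\<^sub>v \<xi>) \<xi> = vst d (\<lambda>p. \<xi> $ p) Y"
proof -
  have "vinner (Y *\<^sub>v \<xi>) \<xi> = (\<Sum>p<d. (\<Sum>q<d. Y $$ (p,q) * \<xi> $ q) * cnj (\<xi> $ p))"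
    unfolding vinner_def using xi Y by (intro sum.cong) (auto simp: scalar_prod_def lessThan_atLeast0 mult.commute)
  also have "\<dots> = vst d (\<lambda>p. \<xi> $ p) Y"
    unfolding vst_def sum_distrib_right by (intro sum.cong refl) (simp add: mult_ac)
  finally show ?thesis .
qed

lemma vstate_vst: assumes "\<xi> \<in> carrier_vec (n*n)"
  shows "vstate \<phi> m n \<xi> X = vst (n*n) (\<lambda>p. \<xi> $ p) (tensor_id \<phi> m n n X)"
  unfolding vstate_def using vinner_vst[OF assms tid_carrier] .

lemma vec_state: assumes "unit_vec_c d \<xi>" shows "is_state d (vst d (\<lambda>p. \<xi> $ p))"
proof -
  have xi: "\<xi> \<in> carrier_vec d" and one: "vinner \<xi> \<xi> = 1" using assms unfolding unit_vec_c_def by auto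
  have "vst d (\<lambda>p. \<xi> $ p) (1\<^sub>m d) = vinner (1\<^sub>m d *\<^sub>v \<xi>) \<xi>" using vinner_vst[OF xi, of "1\<^sub>m d"] by simp
  also have "\<dots> = 1" using xi one by simp
  finally have "(\<Sum>x\<in>{()}. vst d (\<lambda>p. \<xi> $ p) (1\<^sub>m d)) = 1" by simp
  from vst_sum_state[OF _ this] show ?thesis by simp
qed

lemma vstate_state: assumes U: "UCP m n \<phi>" and u: "unit_vec_c (n*n) \<xi>"
  shows "is_state (m*n) (vstate \<phi> m n \<xi>)"
proof -
  have xi: "\<xi> \<in> carrier_vec (n*n)" using u unfolding unit_vec_c_def by auto
  have "vstate \<phi> m n \<xi> = vst (n*n) (\<lambda>p. \<xi> $ p) \<circ> tensor_id \<phi> m n n"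
    using vstate_vst[OF xi] by (auto simp: fun_eq_iff)
  then show ?thesis using comp_state[OF U vec_state[OF u]] by simp
qed

lemma sum_delta1: "q < (d::nat) \<Longrightarrow> (\<Sum>b<d. if b = q then G b else (0::complex)) = G q"
  by (simp add: sum.delta)

lemma sum_delta2: assumes "p < (d::nat)" "q < d"
  shows "(\<Sum>a<d. \<Sum>b<d. if a = p \<and> b = q then F a b else (0::complex)) = F p q"
proof -
  have "\<And>a. (\<Sum>b<d. if a = p \<and> b = q then F a b else 0) = (if a = p then F a q else 0)"
  proof -
    fix a
    have "(\<Sum>b<d. if a = p \<and> b = q then F a b else 0) = (\<Sum>b<d. if b = q then (if a = p then F a b else 0) else 0)"
      by (intro sum.cong) auto
    also have "\<dots> = (if a = p then F a q else 0)" using sum_delta1[OF assms(2), of "\<lambda>b. if a = p then F a b else 0"] by simp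
    finally show "(\<Sum>b<d. if a = p \<and> b = q then F a b else 0) = (if a = p then F a q else 0)" .
  qed
  then show ?thesis using sum_delta1[OF assms(1), of "\<lambda>a. F a q"] by simp
qed

lemma swap3: "(\<Sum>a\<in>A. \<Sum>b\<in>B. \<Sum>c\<in>C. f a b c) = (\<Sum>c\<in>C. \<Sum>a\<in>A. \<Sum>b\<in>B. f a b c)"
proof -
  have "(\<Sum>a\<in>A. \<Sum>b\<in>B. \<Sum>c\<in>C. f a b c) = (\<Sum>a\<in>A. \<Sum>c\<in>C. \<Sum>b\<in>B. f a b c)"
    by (rule sum.cong[OF refl], rule sum.swap)
  also have "\<dots> = (\<Sum>c\<in>C. \<Sum>a\<in>A. \<Sum>b\<in>B. f a b c)" by (rule sum.swap)
  finally show ?thesis .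
qed

lemma sum4: "(\<Sum>x\<in>A \<times> B \<times> C \<times> D. f x) = (\<Sum>a\<in>A. \<Sum>b\<in>B. \<Sum>c\<in>C. \<Sum>d\<in>D. f (a,b,c,d))"
  by (simp add: sum.cartesian_product)

lemma kron_carrier[simp]: "A \<in> carrier_mat m m \<Longrightarrow> B \<in> carrier_mat n n \<Longrightarrow> kron A B \<in> carrier_mat (m*n) (m*n)"
  unfolding kron_def by simp

lemma vst_kron_gen: assumes a: "A \<in> carrier_mat m m" and b: "B \<in> carrier_mat n n"
  shows "vst (m*n) h (kron A B) = (\<Sum>\<alpha><m. \<Sum>l<n. \<Sum>\<alpha>'<m. \<Sum>l'<n.
     A $$ (\<alpha>,\<alpha>') * B $$ (l,l') * (cnj (h (\<alpha>*n+l)) * h (\<alpha>'*n+l')))"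
  unfolding vst_def sum_split_mult
  by (intro sum.cong refl) (simp add: kron_entry[OF a b] mult_ac)

lemma lin_kron_expand: assumes lf: "linf (m*n) f" and a: "A \<in> carrier_mat m m" and b: "B \<in> carrier_mat n n"
  shows "f (kron A B) = (\<Sum>\<alpha><m. \<Sum>l<n. \<Sum>\<alpha>'<m. \<Sum>l'<n.
     A $$ (\<alpha>,\<alpha>') * B $$ (l,l') * f (munit (m*n) (\<alpha>*n+l) (\<alpha>'*n+l')))"
  unfolding lin_expand[OF lf kron_carrier[OF a b]] sum_split_mult
  by (intro sum.cong refl) (simp add: kron_entry[OF a b])

lemma vst_munit: "p < d \<Longrightarrow> q < d \<Longrightarrow> vst d g (munit d p q) = cnj (g p) * g q"
  unfolding vst_def munit_def by (simp add: ifz_simps sum_delta2)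

lemma munit_kron: assumes "\<alpha> < m" "\<alpha>' < m" "l < n" "l' < n"
  shows "munit (m*n) (\<alpha>*n+l) (\<alpha>'*n+l') = kron (munit m \<alpha> \<alpha>') (munit n l l')"
proof (rule eq_matI)
  fix i j assume "i < dim_row (kron (munit m \<alpha> \<alpha>') (munit n l l'))" "j < dim_col (kron (munit m \<alpha> \<alpha>') (munit n l l'))"
  then have i: "i < m*n" and j: "j < m*n" by (auto simp: kron_def munit_def)
  then have n: "n > 0" by (cases n) auto
  have e1: "(i = \<alpha>*n+l) = (i div n = \<alpha> \<and> i mod n = l)" using assms(3)
    by (metis div_mult_mod_eq divmod_aux mult.commute add.commute)
  have e2: "(j = \<alpha>'*n+l') = (j div n = \<alpha>' \<and> j mod n = l')" using assms(4)
    by (metis div_mult_mod_eq divmod_aux mult.commute add.commute)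
  have "i div n < m" "j div n < m" using i j by (simp_all add: less_mult_imp_div_less)
  moreover have "i mod n < n" "j mod n < n" using n by auto
  ultimately show "munit (m*n) (\<alpha>*n+l) (\<alpha>'*n+l') $$ (i,j) = kron (munit m \<alpha> \<alpha>') (munit n l l') $$ (i,j)"
    using i j e1 e2 unfolding kron_def munit_def by auto
qed (auto simp: kron_def munit_def)

lemma vst_linf_sum: "linf d (\<lambda>X. \<Sum>x\<in>I. vst d (h x) X)"
  using vst_linf unfolding linf_def by (simp add: sum.distrib sum_distrib_left)

lemma mc_invertible:
  assumes mc: "marginally_cyclic n \<xi>"
  defines "C \<equiv> mat n n (\<lambda>(j,l). \<xi> $ (j*n+l))"
  shows "\<exists>G \<in> carrier_mat n n. C * G = 1\<^sub>m n"
proof -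
  have xi: "\<xi> \<in> carrier_vec (n*n)" using mc unfolding marginally_cyclic_def by simp
  have Cc: "C \<in> carrier_mat n n" unfolding C_def by simp
  have "det C \<noteq> 0"
  proof
    assume "det C = 0"
    then obtain v where v: "v \<in> carrier_vec n" "v \<noteq> 0\<^sub>v n" "C *\<^sub>v v = 0\<^sub>v n"
      using det_0_iff_vec_prod_zero[OF Cc] by blast
    define b where "b = mat n n (\<lambda>(l,l'). if l = 0 then v $ l' else 0)"
    have bc: "b \<in> carrier_mat n n" unfolding b_def by simp
    have "kron (1\<^sub>m n) b *\<^sub>v \<xi> = 0\<^sub>v (n*n)"
    proof (rule eq_vecI)
      fix P assume "P < dim_vec (0\<^sub>v (n*n) :: complex vec)"
      then have P: "P < n*n" by simp
      then have n: "n > 0" by (cases n) auto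
      define j where "j = P div n"
      define l where "l = P mod n"
      have j: "j < n" using P unfolding j_def by (simp add: less_mult_imp_div_less)
      have l: "l < n" using n unfolding l_def by simp
      have Pe: "P = j*n + l" unfolding j_def l_def by simp
      have "(kron (1\<^sub>m n) b *\<^sub>v \<xi>) $ P = (\<Sum>Q<n*n. kron (1\<^sub>m n) b $$ (P,Q) * \<xi> $ Q)"
        using P xi bc by (simp add: scalar_prod_def lessThan_atLeast0 kron_def)
      also have "\<dots> = (\<Sum>j'<n. \<Sum>l'<n. (if j = j' then 1 else 0) * b $$ (l,l') * \<xi> $ (j'*n+l'))"
        unfolding sum_split_mult Pe using j l bc by (intro sum.cong refl) (simp add: kron_entry[OF one_carrier_mat bc])
      also have "\<dots> = (\<Sum>l'<n. b $$ (l,l') * \<xi> $ (j*n+l'))"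
        using j by (simp add: ifz_simps sum.delta sum_if_const)
      also have "\<dots> = (if l = 0 then (C *\<^sub>v v) $ j else 0)"
        using j l v(1) by (auto simp: b_def C_def scalar_prod_def lessThan_atLeast0 mult.commute intro!: sum.cong)
      also have "\<dots> = 0" using v(3) j by simp
      finally show "(kron (1\<^sub>m n) b *\<^sub>v \<xi>) $ P = 0\<^sub>v (n*n) $ P" using P by simp
    qed (use bc in \<open>simp add: kron_def\<close>)
    then have "b = 0\<^sub>m n n" using mc bc unfolding marginally_cyclic_def by blast
    moreover have "v = 0\<^sub>v n"
    proof (rule eq_vecI)
      fix i assume "i < dim_vec (0\<^sub>v n :: complex vec)"
      then have i: "i < n" by simp
      then have "b $$ (0,i) = v $ i" unfolding b_def by simp
      then show "v $ i = 0\<^sub>v n $ i" using \<open>b = 0\<^sub>m n n\<close> i by simp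
    qed (use v(1) in simp)
    ultimately show False using v(2) by simp
  qed
  then have "C \<in> Units (ring_mat TYPE(complex) n ())" by (rule det_non_zero_imp_unit[OF Cc])
  then show ?thesis unfolding Units_def ring_mat_def by auto
qed

lemma choice2: assumes "\<forall>i<k. \<exists>\<sigma> \<tau>. P i \<sigma> \<tau>" shows "\<exists>\<sigma> \<tau>. \<forall>i<k. P i (\<sigma> i) (\<tau> i)"
proof -
  have "\<forall>i. \<exists>st. i < k \<longrightarrow> P i (fst st) (snd st)" using assms by auto
  then obtain f where f: "\<forall>i. i < k \<longrightarrow> P i (fst (f i)) (snd (f i))" by (metis choice)
  show ?thesis by (rule exI[of _ "\<lambda>i. fst (f i)"], rule exI[of _ "\<lambda>i. snd (f i)"]) (use f in auto)
qed

lemma choice1: assumes "\<forall>i<k. \<exists>g. P i g" shows "\<exists>g. \<forall>i<k. P i (g i)"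
proof -
  have "\<forall>i. \<exists>g. i < k \<longrightarrow> P i g" using assms by auto
  then obtain f where f: "\<forall>i. i < k \<longrightarrow> P i (f i)" by (metis choice)
  show ?thesis by (rule exI[of _ f]) (use f in auto)
qed

lemma prod3_sum: "(c::complex) * (\<Sum>t\<in>A. a t) * (\<Sum>r\<in>B. b r) * (\<Sum>s\<in>C. d s) = (\<Sum>t\<in>A. \<Sum>r\<in>B. \<Sum>s\<in>C. c * a t * b r * d s)"
proof -
  have 1: "c * (\<Sum>t\<in>A. a t) * (\<Sum>r\<in>B. b r) = (\<Sum>t\<in>A. \<Sum>r\<in>B. c * a t * b r)"
    unfolding sum_distrib_left[of c] sum_product ..
  have 2: "(\<Sum>t\<in>A. \<Sum>r\<in>B. c * a t * b r) * (\<Sum>s\<in>C. d s) = (\<Sum>t\<in>A. \<Sum>r\<in>B. \<Sum>s\<in>C. c * a t * b r * d s)"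
    unfolding sum_distrib_right unfolding sum_distrib_left ..
  show ?thesis by (unfold 1 2) (rule refl)
qed

lemma phi_formula:
  assumes U: "UCP m n \<phi>" and xi: "\<xi>0 \<in> carrier_vec (n*n)"
   and CG: "mat n n (\<lambda>(j,l). \<xi>0 $ (j*n+l)) * G = 1\<^sub>m n" and Gc: "G \<in> carrier_mat n n"
   and eq0: "\<forall>X\<in>carrier_mat (m*n) (m*n). vstate \<phi> m n \<xi>0 X = (\<Sum>i<k. complex_of_real (p i) * \<omega>s i X)"
   and prod: "\<forall>i<k. \<forall>a\<in>carrier_mat m m. \<forall>b\<in>carrier_mat n n. \<omega>s i (kron a b) = \<sigma> i a * \<tau> i b"
   and tst: "\<forall>i<k. is_state n (\<tau> i)"
   and us: "\<forall>i<k. \<forall>l<n. \<forall>l'<n. \<tau> i (munit n l l') = (\<Sum>r<n. cnj (us i r l) * us i r l')"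
   and a: "a \<in> carrier_mat m m" and j0: "j0 < n" and j0': "j0' < n"
  shows "\<phi> a $$ (j0,j0') = (\<Sum>i<k. complex_of_real (p i) * \<sigma> i a *
     (\<Sum>r<n. cnj (\<Sum>l<n. us i r l * G $$ (l,j0)) * (\<Sum>l<n. us i r l * G $$ (l,j0'))))"
proof -
  define C where "C = mat n n (\<lambda>(j,l). \<xi>0 $ (j*n+l))"
  define b0 where "b0 = mat n n (\<lambda>(l,l'). cnj (G $$ (l,j0)) * G $$ (l',j0'))"
  have b0c: "b0 \<in> carrier_mat n n" by (simp add: b0_def)
  have pa: "\<phi> a \<in> carrier_mat n n" using UCP_D(1)[OF U a] .
  have cg: "\<And>j j'. j < n \<Longrightarrow> j' < n \<Longrightarrow> (\<Sum>l<n. \<xi>0 $ (j*n+l) * G $$ (l,j')) = (if j = j' then 1 else 0)"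
  proof -
    fix j j' assume jj: "j < n" "j' < n"
    then have "(C * G) $$ (j,j') = (if j = j' then 1 else 0)" using CG unfolding C_def by simp
    moreover have "(C * G) $$ (j,j') = (\<Sum>l<n. \<xi>0 $ (j*n+l) * G $$ (l,j'))"
      using jj Gc unfolding C_def by (simp add: scalar_prod_def lessThan_atLeast0)
    ultimately show "(\<Sum>l<n. \<xi>0 $ (j*n+l) * G $$ (l,j')) = (if j = j' then 1 else 0)" by simp
  qed
  have C1: "vstate \<phi> m n \<xi>0 (kron a b0) = (\<Sum>j<n. \<Sum>l<n. \<Sum>j'<n. \<Sum>l'<n.
        \<phi> a $$ (j,j') * b0 $$ (l,l') * (cnj (\<xi>0 $ (j*n+l)) * \<xi>0 $ (j'*n+l')))"
    unfolding vstate_vst[OF xi] tid_kron[OF U a b0c] vst_kron_gen[OF pa b0c] ..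
  also have "\<dots> = (\<Sum>j<n. \<Sum>j'<n. \<Sum>l<n. \<Sum>l'<n.
        \<phi> a $$ (j,j') * (cnj (\<xi>0 $ (j*n+l) * G $$ (l,j0)) * (\<xi>0 $ (j'*n+l') * G $$ (l',j0'))))"
    apply (rule sum.cong[OF refl])
    apply (rule trans[OF sum.swap])
    apply (intro sum.cong refl)
    by (simp add: b0_def mult_ac)
  also have "\<dots> = (\<Sum>j<n. \<Sum>j'<n. \<phi> a $$ (j,j') * (cnj (\<Sum>l<n. \<xi>0 $ (j*n+l) * G $$ (l,j0)) *
        (\<Sum>l'<n. \<xi>0 $ (j'*n+l') * G $$ (l',j0'))))"
    unfolding cnj_sum sum_product unfolding sum_distrib_left ..
  also have "\<dots> = (\<Sum>j<n. \<Sum>j'<n. \<phi> a $$ (j,j') * (cnj (if j = j0 then 1 else 0) * (if j' = j0' then 1 else 0)))"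
    by (intro sum.cong refl) (simp add: cg j0 j0')
  also have "\<dots> = \<phi> a $$ (j0,j0')"
    using j0 j0' by (simp add: ifz_simps sum.delta sum_if_const)
  finally have C: "vstate \<phi> m n \<xi>0 (kron a b0) = \<phi> a $$ (j0,j0')" .
  have A: "vstate \<phi> m n \<xi>0 (kron a b0) = (\<Sum>i<k. complex_of_real (p i) * (\<sigma> i a * \<tau> i b0))"
    using eq0 prod kron_carrier[OF a b0c] a b0c by simp
  have B: "\<And>i. i < k \<Longrightarrow> \<tau> i b0 = (\<Sum>r<n. cnj (\<Sum>l<n. us i r l * G $$ (l,j0)) * (\<Sum>l<n. us i r l * G $$ (l,j0')))"
  proof -
    fix i assume i: "i < k"
    have "\<tau> i b0 = (\<Sum>l<n. \<Sum>l'<n. b0 $$ (l,l') * (\<Sum>r<n. cnj (us i r l) * us i r l'))"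
      unfolding lin_expand[OF is_state_linf[OF tst[rule_format, OF i]] b0c]
      using us i by (intro sum.cong refl) simp
    also have "\<dots> = (\<Sum>l<n. \<Sum>l'<n. \<Sum>r<n. cnj (us i r l * G $$ (l,j0)) * (us i r l' * G $$ (l',j0')))"
      by (intro sum.cong refl) (simp add: b0_def sum_distrib_left mult_ac)
    also have "\<dots> = (\<Sum>r<n. \<Sum>l<n. \<Sum>l'<n. cnj (us i r l * G $$ (l,j0)) * (us i r l' * G $$ (l',j0')))"
      by (rule swap3)
    also have "\<dots> = (\<Sum>r<n. cnj (\<Sum>l<n. us i r l * G $$ (l,j0)) * (\<Sum>l<n. us i r l * G $$ (l,j0')))"
      unfolding cnj_sum sum_product ..
    finally show "\<tau> i b0 = (\<Sum>r<n. cnj (\<Sum>l<n. us i r l * G $$ (l,j0)) * (\<Sum>l<n. us i r l * G $$ (l,j0')))" .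
  qed
  show ?thesis unfolding C[symmetric] A by (intro sum.cong refl) (simp add: B)
qed

lemma main_sep:
  assumes U: "UCP m n \<phi>" and u0: "unit_vec_c (n*n) \<xi>0" and mc: "marginally_cyclic n \<xi>0"
    and sep0: "separable m n (vstate \<phi> m n \<xi>0)" and st: "is_state (n*n) \<rho>"
  shows "separable m n (\<rho> \<circ> tensor_id \<phi> m n n)"
proof -
  have xi: "\<xi>0 \<in> carrier_vec (n*n)" using u0 unfolding unit_vec_c_def by simp
  obtain G where Gc: "G \<in> carrier_mat n n" and CG: "mat n n (\<lambda>(j,l). \<xi>0 $ (j*n+l)) * G = 1\<^sub>m n"
    using mc_invertible[OF mc] by blast
  obtain k :: nat and p :: "nat \<Rightarrow> real" and \<omega>s :: "nat \<Rightarrow> complex mat \<Rightarrow> complex" where pp: "\<forall>i<k. 0 \<le> p i \<and> product_state m n (\<omega>s i)"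
    and eq0: "\<forall>X\<in>carrier_mat (m*n) (m*n). vstate \<phi> m n \<xi>0 X = (\<Sum>i<k. complex_of_real (p i) * \<omega>s i X)"
    using sep0 unfolding separable_def by (elim conjE exE) blast
  have "\<forall>i<k. \<exists>\<sigma> \<tau>. is_state m \<sigma> \<and> is_state n \<tau> \<and>
      (\<forall>a\<in>carrier_mat m m. \<forall>b\<in>carrier_mat n n. \<omega>s i (kron a b) = \<sigma> a * \<tau> b)"
    using pp unfolding product_state_def by blast
  from choice2[OF this] obtain \<sigma> \<tau> where st_all: "\<forall>i<k. is_state m (\<sigma> i) \<and> is_state n (\<tau> i) \<and>
      (\<forall>a\<in>carrier_mat m m. \<forall>b\<in>carrier_mat n n. \<omega>s i (kron a b) = \<sigma> i a * \<tau> i b)"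
    by blast
  have "\<forall>i<k. \<exists>g. \<forall>a<m. \<forall>a'<m. \<sigma> i (munit m a a') = (\<Sum>t<m. cnj (g t a) * g t a')"
    using st_all state_decomp_units by blast
  from choice1[OF this] obtain gs where gs: "\<forall>i<k. \<forall>a<m. \<forall>a'<m. \<sigma> i (munit m a a') = (\<Sum>t<m. cnj (gs i t a) * gs i t a')"
    by blast
  have "\<forall>i<k. \<exists>g. \<forall>l<n. \<forall>l'<n. \<tau> i (munit n l l') = (\<Sum>r<n. cnj (g r l) * g r l')"
    using st_all state_decomp_units by blast
  from choice1[OF this] obtain us where us: "\<forall>i<k. \<forall>l<n. \<forall>l'<n. \<tau> i (munit n l l') = (\<Sum>r<n. cnj (us i r l) * us i r l')"
    by blast
  obtain vs where vs: "\<forall>P<n*n. \<forall>Q<n*n. \<rho> (munit (n*n) P Q) = (\<Sum>s<n*n. cnj (vs s P) * vs s Q)"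
    using state_decomp_units[OF st] by blast
  define z where "z i r j = (\<Sum>l<n. us i r l * G $$ (l,j))" for i r j
  have phi: "\<And>a j j'. a \<in> carrier_mat m m \<Longrightarrow> j < n \<Longrightarrow> j' < n \<Longrightarrow>
      \<phi> a $$ (j,j') = (\<Sum>i<k. complex_of_real (p i) * \<sigma> i a * (\<Sum>r<n. cnj (z i r j) * z i r j'))"
    unfolding z_def
    by (rule phi_formula[OF U xi CG Gc eq0, of \<sigma> \<tau> us]) (use st_all us in auto)
  define I where "I = {..<k} \<times> {..<m} \<times> {..<n} \<times> {..<n*n}"
  define gg :: "nat \<times> nat \<times> nat \<times> nat \<Rightarrow> nat \<Rightarrow> complex"
    where "gg = (\<lambda>(i,t,r,s). \<lambda>a. complex_of_real (sqrt (p i)) * gs i t a)"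
  define yy :: "nat \<times> nat \<times> nat \<times> nat \<Rightarrow> nat \<Rightarrow> complex"
    where "yy = (\<lambda>(i,t,r,s). \<lambda>c. (\<Sum>j<n. z i r j * vs s (j*n+c)))"
  have finI: "finite I" unfolding I_def by simp
  have lin1: "linf (m*n) (\<rho> \<circ> tensor_id \<phi> m n n)" by (rule is_state_linf[OF comp_state[OF U st]])
  have unit_eq: "\<And>P Q. P < m*n \<Longrightarrow> Q < m*n \<Longrightarrow>
     (\<rho> \<circ> tensor_id \<phi> m n n) (munit (m*n) P Q) = (\<Sum>x\<in>I. vst (m*n) (pvec n (gg x) (yy x)) (munit (m*n) P Q))"
  proof -
    fix P Q assume P: "P < m*n" and Q: "Q < m*n"
    then have n: "n > 0" by (cases n) auto
    define \<alpha> where "\<alpha> = P div n"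
    define l where "l = P mod n"
    define \<alpha>' where "\<alpha>' = Q div n"
    define l' where "l' = Q mod n"
    have r: "\<alpha> < m" "\<alpha>' < m" "l < n" "l' < n"
      using P Q n unfolding \<alpha>_def \<alpha>'_def l_def l'_def by (simp_all add: less_mult_imp_div_less)
    have Pe: "P = \<alpha>*n + l" and Qe: "Q = \<alpha>'*n + l'" unfolding \<alpha>_def \<alpha>'_def l_def l'_def by simp_all
    define E where "E = munit m \<alpha> \<alpha>'"
    have Ec: "E \<in> carrier_mat m m" unfolding E_def by simp
    have pE: "\<phi> E \<in> carrier_mat n n" using UCP_D(1)[OF U Ec] .
    define W where "W i t r s j j' = complex_of_real (p i) * (cnj (gs i t \<alpha>) * gs i t \<alpha>') *
       (cnj (z i r j) * z i r j') * (cnj (vs s (j*n+l)) * vs s (j'*n+l'))" for i t r s j j'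
    have "(\<rho> \<circ> tensor_id \<phi> m n n) (munit (m*n) P Q) = \<rho> (kron (\<phi> E) (munit n l l'))"
      unfolding Pe Qe munit_kron[OF r] E_def[symmetric] using tid_kron[OF U Ec munit_carrier] by simp
    also have "\<dots> = (\<Sum>j<n. \<Sum>c<n. \<Sum>j'<n. \<Sum>c'<n. \<phi> E $$ (j,j') * munit n l l' $$ (c,c') *
        \<rho> (munit (n*n) (j*n+c) (j'*n+c')))"
      by (rule lin_kron_expand[OF is_state_linf[OF st] pE munit_carrier])
    also have "\<dots> = (\<Sum>j<n. \<Sum>j'<n. \<Sum>c<n. \<Sum>c'<n. if c = l \<and> c' = l' then \<phi> E $$ (j,j') *
        \<rho> (munit (n*n) (j*n+c) (j'*n+c')) else 0)"
      apply (rule sum.cong[OF refl])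
      apply (rule trans[OF sum.swap])
      apply (intro sum.cong refl)
      by (simp add: munit_def)
    also have "\<dots> = (\<Sum>j<n. \<Sum>j'<n. \<phi> E $$ (j,j') * \<rho> (munit (n*n) (j*n+l) (j'*n+l')))"
      by (intro sum.cong refl) (rule sum_delta2[OF r(3,4)])
    also have "\<dots> = (\<Sum>j<n. \<Sum>j'<n. \<Sum>x\<in>I. case x of (i,t,r,s) \<Rightarrow> W i t r s j j')"
    proof (intro sum.cong refl)
      fix j j' assume j: "j \<in> {..<n}" and j': "j' \<in> {..<n}"
      have jl: "j*n+l < n*n" "j'*n+l' < n*n" using j j' r by (simp_all add: idx_lt)
      have "\<phi> E $$ (j,j') * \<rho> (munit (n*n) (j*n+l) (j'*n+l')) =
         (\<Sum>i<k. complex_of_real (p i) * (\<Sum>t<m. cnj (gs i t \<alpha>) * gs i t \<alpha>') * (\<Sum>r<n. cnj (z i r j) * z i r j')) *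
         (\<Sum>s<n*n. cnj (vs s (j*n+l)) * vs s (j'*n+l'))"
        unfolding phi[OF Ec j[simplified] j'[simplified]] using vs jl gs r unfolding E_def by simp
      also have "\<dots> = (\<Sum>i<k. \<Sum>t<m. \<Sum>r<n. \<Sum>s<n*n. W i t r s j j')"
        unfolding sum_distrib_right prod3_sum W_def by (simp add: mult.assoc)
      also have "\<dots> = (\<Sum>x\<in>I. case x of (i,t,r,s) \<Rightarrow> W i t r s j j')"
        unfolding I_def sum4 by simp
      finally show "\<phi> E $$ (j,j') * \<rho> (munit (n*n) (j*n+l) (j'*n+l')) = (\<Sum>x\<in>I. case x of (i,t,r,s) \<Rightarrow> W i t r s j j')" .
    qed
    also have "\<dots> = (\<Sum>x\<in>I. \<Sum>j<n. \<Sum>j'<n. case x of (i,t,r,s) \<Rightarrow> W i t r s j j')"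
      by (rule swap3)
    also have "\<dots> = (\<Sum>x\<in>I. vst (m*n) (pvec n (gg x) (yy x)) (munit (m*n) P Q))"
    proof (rule sum.cong[OF refl])
      fix x assume "x \<in> I"
      then obtain i t r s where x: "x = (i,t,r,s)" and i: "i < k" unfolding I_def by auto
      have p0: "0 \<le> p i" using pp i by simp
      have sq: "cnj (complex_of_real (sqrt (p i))) * complex_of_real (sqrt (p i)) = complex_of_real (p i)"
        using p0 by (simp flip: of_real_mult)
      have "vst (m*n) (pvec n (gg x) (yy x)) (munit (m*n) P Q) = cnj (pvec n (gg x) (yy x) P) * pvec n (gg x) (yy x) Q"
        by (rule vst_munit[OF P Q])
      also have "\<dots> = complex_of_real (p i) * (cnj (gs i t \<alpha>) * gs i t \<alpha>') * (cnj (yy x l) * yy x l')"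
        unfolding pvec_def gg_def x using sq unfolding \<alpha>_def \<alpha>'_def l_def l'_def
        by (simp add: mult_ac)
      also have "cnj (yy x l) * yy x l' = (\<Sum>j<n. \<Sum>j'<n. (cnj (z i r j) * z i r j') * (cnj (vs s (j*n+l)) * vs s (j'*n+l')))"
        unfolding yy_def x apply (simp add: cnj_sum sum_product mult_ac) by (rule sum.swap)
      finally show "(\<Sum>j<n. \<Sum>j'<n. case x of (i,t,r,s) \<Rightarrow> W i t r s j j') = vst (m*n) (pvec n (gg x) (yy x)) (munit (m*n) P Q)"
        unfolding x W_def by (simp add: sum_distrib_left mult_ac)
    qed
    finally show "(\<rho> \<circ> tensor_id \<phi> m n n) (munit (m*n) P Q) = (\<Sum>x\<in>I. vst (m*n) (pvec n (gg x) (yy x)) (munit (m*n) P Q))" .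
  qed
  have eqX: "\<forall>X\<in>carrier_mat (m*n) (m*n). (\<rho> \<circ> tensor_id \<phi> m n n) X = (\<Sum>x\<in>I. vst (m*n) (pvec n (gg x) (yy x)) X)"
  proof
    fix X :: "complex mat" assume X: "X \<in> carrier_mat (m*n) (m*n)"
    show "(\<rho> \<circ> tensor_id \<phi> m n n) X = (\<Sum>x\<in>I. vst (m*n) (pvec n (gg x) (yy x)) X)"
      unfolding lin_expand[OF lin1 X] lin_expand[OF vst_linf_sum X]
      by (intro sum.cong refl) (simp add: unit_eq[unfolded o_apply])
  qed
  have one: "(\<rho> \<circ> tensor_id \<phi> m n n) (1\<^sub>m (m*n)) = 1"
    using comp_state[OF U st] unfolding is_state_def by blast
  show ?thesis by (rule sep_criterion[OF finI eqX one])
qed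

lemma kron1_mult: assumes bc: "b \<in> carrier_mat n n" and xi: "\<xi> \<in> carrier_vec (n*n)" and j: "j < n" and l: "l < n"
  shows "(kron (1\<^sub>m n) b *\<^sub>v \<xi>) $ (j*n+l) = (\<Sum>l'<n. b $$ (l,l') * \<xi> $ (j*n+l'))"
proof -
  have P: "j*n+l < n*n" using j l by (simp add: idx_lt)
  have "(kron (1\<^sub>m n) b *\<^sub>v \<xi>) $ (j*n+l) = (\<Sum>Q<n*n. kron (1\<^sub>m n) b $$ (j*n+l,Q) * \<xi> $ Q)"
    using P xi bc by (simp add: scalar_prod_def lessThan_atLeast0 kron_def)
  also have "\<dots> = (\<Sum>j'<n. \<Sum>l'<n. (if j = j' then 1 else 0) * b $$ (l,l') * \<xi> $ (j'*n+l'))"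
    unfolding sum_split_mult using j l bc by (intro sum.cong refl) (simp add: kron_entry[OF one_carrier_mat bc])
  also have "\<dots> = (\<Sum>l'<n. b $$ (l,l') * \<xi> $ (j*n+l'))"
    using j by (simp add: ifz_simps sum.delta sum_if_const)
  finally show ?thesis .
qed

lemma max_ent_exists: assumes n: "n > 0"
  shows "\<exists>\<xi>. unit_vec_c (n*n) \<xi> \<and> marginally_cyclic n \<xi>"
proof -
  define c where "c = complex_of_real (1 / sqrt (real n))"
  define \<xi> where "\<xi> = vec (n*n) (\<lambda>P. if P div n = P mod n then c else 0)"
  have xi: "\<xi> \<in> carrier_vec (n*n)" unfolding \<xi>_def by simp
  have ent: "\<And>j l. j < n \<Longrightarrow> l < n \<Longrightarrow> \<xi> $ (j*n+l) = (if j = l then c else 0)"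
  proof -
    fix j l assume j: "j < n" and l: "l < n"
    have "j*n+l < n*n" by (rule idx_lt[OF j l])
    moreover have "(j*n+l) div n = j" "(j*n+l) mod n = l" using divmod_aux[OF l] by auto
    ultimately show "\<xi> $ (j*n+l) = (if j = l then c else 0)" unfolding \<xi>_def by simp
  qed
  have cc: "c * cnj c = complex_of_real (1 / real n)"
    unfolding c_def using n by (simp flip: of_real_mult)
  have "vinner \<xi> \<xi> = (\<Sum>P<n*n. \<xi> $ P * cnj (\<xi> $ P))" unfolding vinner_def using xi by simp
  also have "\<dots> = (\<Sum>j<n. \<Sum>l<n. if j = l then c * cnj c else 0)"
    unfolding sum_split_mult by (intro sum.cong refl) (simp add: ent)
  also have "\<dots> = of_nat n * complex_of_real (1 / real n)" by (simp add: cc)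
  also have "\<dots> = 1"
  proof -
    have "real n * (1 / real n) = 1" using n by simp
    then have "complex_of_real (real n * (1 / real n)) = 1" by simp
    moreover have "of_nat n * complex_of_real (1 / real n) = complex_of_real (real n * (1 / real n))" by simp
    ultimately show ?thesis by simp
  qed
  finally have u: "unit_vec_c (n*n) \<xi>" unfolding unit_vec_c_def using xi by simp
  have c0: "c \<noteq> 0" unfolding c_def using n by simp
  have "marginally_cyclic n \<xi>"
    unfolding marginally_cyclic_def
  proof (intro conjI ballI impI)
    show "\<xi> \<in> carrier_vec (n*n)" by fact
    fix b assume bc: "b \<in> carrier_mat n n" and z: "kron (1\<^sub>m n) b *\<^sub>v \<xi> = 0\<^sub>v (n*n)"
    show "b = 0\<^sub>m n n"
    proof (rule eq_matI)
      fix l j assume "l < dim_row (0\<^sub>m n n :: complex mat)" "j < dim_col (0\<^sub>m n n :: complex mat)"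
      then have l: "l < n" and j: "j < n" by auto
      have "(kron (1\<^sub>m n) b *\<^sub>v \<xi>) $ (j*n+l) = 0" using z idx_lt[OF j l] by simp
      moreover have "(kron (1\<^sub>m n) b *\<^sub>v \<xi>) $ (j*n+l) = b $$ (l,j) * c"
        unfolding kron1_mult[OF bc xi j l] using j by (simp add: ent ifz_simps sum.delta)
      ultimately show "b $$ (l,j) = 0\<^sub>m n n $$ (l,j)" using c0 l j by simp
    qed (use bc in auto)
  qed
  with u show ?thesis by blast
qed

lemma no_state_0: "\<not> is_state 0 \<rho>"
proof
  assume st: "is_state 0 \<rho>"
  have e: "1\<^sub>m 0 + 1\<^sub>m 0 = (1\<^sub>m 0 :: complex mat)" by (rule eq_matI) auto
  have "\<rho> (1\<^sub>m 0 + 1\<^sub>m 0) = \<rho> (1\<^sub>m 0) + \<rho> (1\<^sub>m 0)" using st unfolding is_state_def by simp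
  then show False using st e unfolding is_state_def by simp
qed

lemma vstate_comp: assumes "\<xi> \<in> carrier_vec (n*n)"
  shows "vstate \<phi> m n \<xi> = vst (n*n) (\<lambda>p. \<xi> $ p) \<circ> tensor_id \<phi> m n n"
  using vstate_vst[OF assms] by (auto simp: fun_eq_iff)

lemma key:
  assumes U: "UCP m n \<phi>" and ex: "\<exists>\<rho> \<in> S_phi \<phi> m n. \<not> entangled m n \<rho>"
  shows "entanglement_breaking m n \<phi> \<and> (\<forall>\<rho> \<in> S_phi \<phi> m n. \<not> entangled m n \<rho>)"
proof -
  obtain \<xi>0 where u0: "unit_vec_c (n*n) \<xi>0" and mc0: "marginally_cyclic n \<xi>0"
    and ne: "\<not> entangled m n (vstate \<phi> m n \<xi>0)"
    using ex unfolding S_phi_def by blast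
  have sep0: "separable m n (vstate \<phi> m n \<xi>0)"
    using ne vstate_state[OF U u0] unfolding entangled_def by blast
  have all: "\<And>\<rho>. is_state (n*n) \<rho> \<Longrightarrow> separable m n (\<rho> \<circ> tensor_id \<phi> m n n)"
    by (rule main_sep[OF U u0 mc0 sep0])
  have eb: "entanglement_breaking m n \<phi>" unfolding entanglement_breaking_def using all by blast
  have "\<forall>\<rho> \<in> S_phi \<phi> m n. \<not> entangled m n \<rho>"
  proof
    fix \<rho> assume "\<rho> \<in> S_phi \<phi> m n"
    then obtain \<xi> where u: "unit_vec_c (n*n) \<xi>" and r: "\<rho> = vstate \<phi> m n \<xi>" unfolding S_phi_def by blast
    have xi: "\<xi> \<in> carrier_vec (n*n)" using u unfolding unit_vec_c_def by simp
    have "separable m n \<rho>" unfolding r vstate_comp[OF xi] by (rule all[OF vec_state[OF u]])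
    then show "\<not> entangled m n \<rho>" unfolding entangled_def by blast
  qed
  with eb show ?thesis by blast
qed

theorem corollary2p3:
  fixes m n :: nat and \<phi> :: "complex mat \<Rightarrow> complex mat"
  assumes "UCP m n \<phi>"
  shows "((\<exists>\<rho> \<in> S_phi \<phi> m n. entangled m n \<rho>) \<longrightarrow>
           (\<forall>\<rho> \<in> S_phi \<phi> m n. entangled m n \<rho>) \<and> preserves_entanglement m n \<phi>) \<and>
         (\<not> (\<exists>\<rho> \<in> S_phi \<phi> m n. entangled m n \<rho>) \<longrightarrow> entanglement_breaking m n \<phi>)"
proof (intro conjI impI)
  assume ex: "\<exists>\<rho> \<in> S_phi \<phi> m n. entangled m n \<rho>"
  show all: "\<forall>\<rho> \<in> S_phi \<phi> m n. entangled m n \<rho>"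
  proof (rule ccontr)
    assume "\<not> (\<forall>\<rho> \<in> S_phi \<phi> m n. entangled m n \<rho>)"
    then have "\<exists>\<rho> \<in> S_phi \<phi> m n. \<not> entangled m n \<rho>" by blast
    then have "\<forall>\<rho> \<in> S_phi \<phi> m n. \<not> entangled m n \<rho>" using key[OF assms] by blast
    with ex show False by blast
  qed
  show "preserves_entanglement m n \<phi>"
    unfolding preserves_entanglement_def using all unfolding S_phi_def by blast
next
  assume nex: "\<not> (\<exists>\<rho> \<in> S_phi \<phi> m n. entangled m n \<rho>)"
  show "entanglement_breaking m n \<phi>"
  proof (cases "n = 0")
    case True
    then show ?thesis unfolding entanglement_breaking_def using no_state_0 by simp
  next
    case False
    then obtain \<xi> where "unit_vec_c (n*n) \<xi>" "marginally_cyclic n \<xi>" using max_ent_exists by blast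
    then have "vstate \<phi> m n \<xi> \<in> S_phi \<phi> m n" unfolding S_phi_def by blast
    then have "\<exists>\<rho> \<in> S_phi \<phi> m n. \<not> entangled m n \<rho>" using nex by blast
    then show ?thesis using key[OF assms] by blast
  qed
qed

end
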